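(* In the filtered radical-pair control problem described in the context, let $\mathbf{u}^\ast\in\mathcal{V}$ be an optimal control, i.e. $\mathcal{J}(\mathbf{u}^\ast)=\max_{\mathbf{u}\in\mathcal{V}}\mathcal{J}(\mathbf{u})$. Then \[ \max_{\mathbf{u}\in\mathcal{V}}\int_0^T\mathcal{H}\big(\psi(\cdot;\mathbf{u}^\ast),\mathbf{u}(t),\chi(\cdot;\mathbf{u}^\ast)\big)(t)\,dt=\int_0^T\mathcal{H}\big(\psi(\cdot;\mathbf{u}^\ast),\mathbf{u}^\ast(t),\chi(\cdot;\mathbf{u}^\ast)\big)(t)\,dt . \]
   Context: Fix $p\in\mathbb{N}$, $n=2^{p+2}$, $T>0$, real constants $\hbar>0$, $\mu_B$, $g$, rates $k_S,k_T>0$, a filtering parameter $\gamma>0$, $\mathbf{v}_0\in\mathbb{R}^3$, and hyperfine vectors $A_j\in\mathbb{R}^3$, $j=1,\dots,p$. $S_1=(S_{1x},S_{1y},S_{1z})$, $S_2$ are the electron spin operators and $I_j$ the nuclear spin operators (Hermitian $n\times n$ matrices, e.g. $S_{1i}=\tfrac12\sigma_i\otimes E_2\otimes E_{2^p}$, $S_{2i}=E_2\otimes\tfrac12\sigma_i\otimes E_{2^p}$, $\sigma_i$ Pauli matrices), and $P_S,P_T$ the projection matrices onto singlet and triplet subspaces. Define $\mathbf{H}_Z(\mathbf{v})=\mu_B g\sum_{i=x,y,z}(S_{1i}+S_{2i})v_i$, $\mathbf{H}_{hfi}=\mu_B g\sum_{j=1}^p\sum_{i}A_{ji}I_{ji}S_{1i}$,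 $\mathbf{K}=\tfrac12(k_SP_S+k_TP_T)$, $\mathbf{H}(\mathbf{v})=\mathbf{H}_Z(\mathbf{v})+\mathbf{H}_{hfi}-i\mathbf{K}$, $\mathbf{H}^\ast(\mathbf{v})=\mathbf{H}_Z(\mathbf{v})+\mathbf{H}_{hfi}+i\mathbf{K}$. With $\{e_j\}$ the standard basis of $\mathbb{R}^n$, the triplet initial states are $\psi^{j-2^p}_T=(e_j-e_{j+2^p})/\sqrt2$ and $\psi^j_T=e_{j-2^p}$ for $j=2^p+1,\dots,2^{p+1}$, and $\psi^j_T=e_{j+2^p}$ for $j=2^{p+1}+1,\dots,3\cdot2^p$. With $m_i<M_i$, $V=\prod_{i=x,y,z}[m_i,M_i]$ and $\mathcal{V}=\{\mathbf{u}\in L_2(0,T;\mathbb{R}^3):\mathbf{u}(t)\in V\text{ a.e.}\}$. For $\mathbf{u}\in\mathcal{V}$: $\mathbf{v}(t;\mathbf{u})=e^{-\gamma t}[\mathbf{v}_0+\int_0^t\gamma e^{\gamma\tau}\mathbf{u}(\tau)d\tau]$; $\psi^l(\cdot;\mathbf{u})$ solves $i\hbar\,d\psi^l/dt=\mathbf{H}(\mathbf{v}(t;\mathbf{u}))\psi^l$, $\psi^l(0)=\psi^l_T$; $\chi^l(\cdot;\mathbf{u})$ solves $i\hbar\,d\chi^l/dt=\mathbf{H}^\ast(\mathbf{v}(t;\mathbf{u}))\chi^l-i\frac{k_S}{2}P_S\psi^l(t;\mathbf{u})$ on $[0,T)$, $\chi^l(T)=0$, $l=1,\dots,3\cdot2^p$;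 $\psi(\cdot;\mathbf{u})=(\psi^l(\cdot;\mathbf{u}))_l$, $\chi(\cdot;\mathbf{u})=(\chi^l(\cdot;\mathbf{u}))_l$. The cost is $\mathcal{J}(\mathbf{u})=\frac{k_S}{3\cdot2^{p+1}}\sum_{l=1}^{3\cdot2^p}\int_0^T\langle\psi^l(t;\mathbf{u})|P_S|\psi^l(t;\mathbf{u})\rangle_{\mathbb{C}^n}dt$. The Hamilton–Pontryagin function, for trajectories $\psi=(\psi^l),\chi=(\chi^l)$, $t\in[0,T]$ and $\mathbf{w}\in\mathbb{R}^3$, is $\mathcal{H}(\psi,\mathbf{w},\chi)(t)=\frac{\mu_Bg}{3\cdot2^{p-1}}\sum_{l=1}^{3\cdot2^p}\int_t^T\mathrm{Im}\,\langle\chi^l(\tau)|S_1+S_2|\psi^l(\tau)\rangle_{\mathbb{C}^n}\gamma e^{\gamma(t-\tau)}d\tau\cdot\mathbf{w}$ (dot product in $\mathbb{R}^3$). Here $\langle a|M|b\rangle_{\mathbb{C}^n}=\sum\bar a_kM_{kl}b_l$ and $\langle\chi|S_1+S_2|\psi\rangle\in\mathbb{C}^3$ has components $\langle\chi|S_{1i}+S_{2i}|\psi\rangle$. *)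

theory Defs
  imports "HOL-Analysis.Analysis"
begin

text \<open>Vectors of C^n are functions nat => complex (only indices k < n matter,
  0-based: index k corresponds to the paper's basis vector e_(k+1)); matrices are
  nat => nat => complex.  Spatial components x,y,z are the indices 1,2,3 of real^3.\<close>

type_synonym cvec = "nat \<Rightarrow> complex"
type_synonym cmat = "nat \<Rightarrow> nat \<Rightarrow> complex"

definition ndim :: "nat \<Rightarrow> nat" where "ndim p = 2 ^ (p + 2)"

definition eye :: cmat where "eye = (\<lambda>i j. if i = j then 1 else 0)"

definition mmul :: "nat \<Rightarrow> cmat \<Rightarrow> cmat \<Rightarrow> cmat" where
  "mmul n A B = (\<lambda>i j. \<Sum>m<n. A i m * B m j)"

definition mvmul :: "nat \<Rightarrow> cmat \<Rightarrow> cvec \<Rightarrow> cvec" where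
  "mvmul n A x = (\<lambda>i. \<Sum>m<n. A i m * x m)"

definition kron :: "nat \<Rightarrow> cmat \<Rightarrow> cmat \<Rightarrow> cmat" where
  "kron dB A B = (\<lambda>i j. A (i div dB) (j div dB) * B (i mod dB) (j mod dB))"

definition braket :: "nat \<Rightarrow> cvec \<Rightarrow> cmat \<Rightarrow> cvec \<Rightarrow> complex" where
  "braket n a M b = (\<Sum>k<n. \<Sum>l<n. cnj (a k) * M k l * b l)"

text \<open>Pauli matrices sigma_x, sigma_y, sigma_z (indexed by 1,2,3 :: 3; basis 0 = up, 1 = down).\<close>
definition pauli :: "3 \<Rightarrow> cmat" where
  "pauli i = (\<lambda>a b.
     if a \<ge> 2 \<or> b \<ge> 2 then 0
     else if i = 1 then (if a \<noteq> b then 1 else 0)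
     else if i = 2 then (if a = 0 \<and> b = 1 then - \<i> else if a = 1 \<and> b = 0 then \<i> else 0)
     else (if a = b then (if a = 0 then 1 else -1) else 0))"

definition half_pauli :: "3 \<Rightarrow> cmat" where
  "half_pauli i = (\<lambda>a b. pauli i a b / 2)"

text \<open>S_1i = 1/2 sigma_i (x) E_2 (x) E_(2^p),  S_2i = E_2 (x) 1/2 sigma_i (x) E_(2^p).\<close>
definition S1 :: "nat \<Rightarrow> 3 \<Rightarrow> cmat" where
  "S1 p i = kron (2 ^ (p + 1)) (half_pauli i) (kron (2 ^ p) eye eye)"

definition S2 :: "nat \<Rightarrow> 3 \<Rightarrow> cmat" where
  "S2 p i = kron (2 ^ (p + 1)) eye (kron (2 ^ p) (half_pauli i) eye)"

text \<open>Nuclear spin (spin-1/2) operators, j = 1..p: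
  I_ji = E_2 (x) E_2 (x) E_(2^(j-1)) (x) 1/2 sigma_i (x) E_(2^(p-j)).\<close>
definition Inuc :: "nat \<Rightarrow> nat \<Rightarrow> 3 \<Rightarrow> cmat" where
  "Inuc p j i = kron (2 ^ p) (kron 2 eye eye)
                     (kron (2 ^ (p - j)) (kron 2 eye (half_pauli i)) eye)"

text \<open>Singlet projection P_S = |S><S| (x) E_(2^p), with S = (|up,down> - |down,up>)/sqrt 2;
  triplet projection P_T = E_n - P_S.\<close>
definition singlet_vec :: "nat \<Rightarrow> complex" where
  "singlet_vec a = (if a = 1 then 1 / sqrt 2 else if a = 2 then - 1 / sqrt 2 else 0)"

definition PS :: "nat \<Rightarrow> cmat" where
  "PS p = kron (2 ^ p) (\<lambda>a b. singlet_vec a * cnj (singlet_vec b)) eye"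

definition PT :: "nat \<Rightarrow> cmat" where
  "PT p = (\<lambda>a b. eye a b - PS p a b)"

definition HZ :: "nat \<Rightarrow> real \<Rightarrow> real \<Rightarrow> real^3 \<Rightarrow> cmat" where
  "HZ p muB g v = (\<lambda>a b. of_real (muB * g) *
       (\<Sum>i\<in>UNIV. (S1 p i a b + S2 p i a b) * of_real (v $ i)))"

definition Hhfi :: "nat \<Rightarrow> real \<Rightarrow> real \<Rightarrow> (nat \<Rightarrow> real^3) \<Rightarrow> cmat" where
  "Hhfi p muB g A = (\<lambda>a b. of_real (muB * g) *
       (\<Sum>j\<in>{1..p}. \<Sum>i\<in>UNIV. of_real (A j $ i) * mmul (ndim p) (Inuc p j i) (S1 p i) a b))"

definition Kmat :: "nat \<Rightarrow> real \<Rightarrow> real \<Rightarrow> cmat" where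
  "Kmat p kS kT = (\<lambda>a b. (of_real kS * PS p a b + of_real kT * PT p a b) / 2)"

definition Hfull :: "nat \<Rightarrow> real \<Rightarrow> real \<Rightarrow> (nat \<Rightarrow> real^3) \<Rightarrow> real \<Rightarrow> real \<Rightarrow> real^3 \<Rightarrow> cmat" where
  "Hfull p muB g A kS kT v = (\<lambda>a b. HZ p muB g v a b + Hhfi p muB g A a b - \<i> * Kmat p kS kT a b)"

definition Hstar :: "nat \<Rightarrow> real \<Rightarrow> real \<Rightarrow> (nat \<Rightarrow> real^3) \<Rightarrow> real \<Rightarrow> real \<Rightarrow> real^3 \<Rightarrow> cmat" where
  "Hstar p muB g A kS kT v = (\<lambda>a b. HZ p muB g v a b + Hhfi p muB g A a b + \<i> * Kmat p kS kT a b)"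

text \<open>Triplet initial states psi_T^l, 0-based l < 3 * 2^p (paper's l-1), 0-based components.\<close>
definition psiT :: "nat \<Rightarrow> nat \<Rightarrow> cvec" where
  "psiT p l = (\<lambda>k.
     if l < 2 ^ p then
       ((if k = l + 2 ^ p then 1 else 0) - (if k = l + 2 ^ (p + 1) then 1 else 0)) / sqrt 2
     else if l < 2 ^ (p + 1) then (if k = l - 2 ^ p then 1 else 0)
     else if l < 3 * 2 ^ p then (if k = l + 2 ^ p then 1 else 0)
     else 0)"

definition Ctrl :: "real \<Rightarrow> real^3 \<Rightarrow> real^3 \<Rightarrow> (real \<Rightarrow> real^3) set" where
  "Ctrl T m M = {u. set_borel_measurable lborel {0..T} u
                   \<and> set_integrable lborel {0..T} (\<lambda>t. (norm (u t))\<^sup>2)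
                   \<and> (AE t in lborel. t \<in> {0..T} \<longrightarrow> u t \<in> cbox m M)}"

definition vfilt :: "real \<Rightarrow> real^3 \<Rightarrow> (real \<Rightarrow> real^3) \<Rightarrow> real \<Rightarrow> real^3" where
  "vfilt gamma v0 u t = exp (- gamma * t) *\<^sub>R
     (v0 + set_lebesgue_integral lborel {0..t} (\<lambda>\<tau>. (gamma * exp (gamma * \<tau>)) *\<^sub>R u \<tau>))"

definition is_psi_sol :: "nat \<Rightarrow> real \<Rightarrow> real \<Rightarrow> real \<Rightarrow> real \<Rightarrow> (nat \<Rightarrow> real^3) \<Rightarrow> real \<Rightarrow> real
     \<Rightarrow> (real \<Rightarrow> real^3) \<Rightarrow> cvec \<Rightarrow> (real \<Rightarrow> cvec) \<Rightarrow> bool" where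
  "is_psi_sol p T hbar muB g A kS kT v psi0 psi \<longleftrightarrow>
     (\<forall>k < ndim p. psi 0 k = psi0 k) \<and>
     (\<forall>t\<in>{0..T}. \<forall>k < ndim p.
        ((\<lambda>s. psi s k) has_vector_derivative
           mvmul (ndim p) (Hfull p muB g A kS kT (v t)) (psi t) k / (\<i> * of_real hbar))
        (at t within {0..T}))"

definition is_chi_sol :: "nat \<Rightarrow> real \<Rightarrow> real \<Rightarrow> real \<Rightarrow> real \<Rightarrow> (nat \<Rightarrow> real^3) \<Rightarrow> real \<Rightarrow> real
     \<Rightarrow> (real \<Rightarrow> real^3) \<Rightarrow> (real \<Rightarrow> cvec) \<Rightarrow> (real \<Rightarrow> cvec) \<Rightarrow> bool" where
  "is_chi_sol p T hbar muB g A kS kT v psi chi \<longleftrightarrow>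
     (\<forall>k < ndim p. chi T k = 0) \<and>
     (\<forall>k < ndim p. continuous_on {0..T} (\<lambda>s. chi s k)) \<and>
     (\<forall>t\<in>{0..<T}. \<forall>k < ndim p.
        ((\<lambda>s. chi s k) has_vector_derivative
           (mvmul (ndim p) (Hstar p muB g A kS kT (v t)) (chi t) k
            - \<i> * of_real (kS / 2) * mvmul (ndim p) (PS p) (psi t) k) / (\<i> * of_real hbar))
        (at t within {0..T}))"

definition Jcost :: "nat \<Rightarrow> real \<Rightarrow> real \<Rightarrow> (nat \<Rightarrow> real \<Rightarrow> cvec) \<Rightarrow> real" where
  "Jcost p T kS psi = kS / (3 * 2 ^ (p + 1)) *
     (\<Sum>l < 3 * 2 ^ p. set_lebesgue_integral lborel {0..T}
         (\<lambda>t. Re (braket (ndim p) (psi l t) (PS p) (psi l t))))"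

definition HP :: "nat \<Rightarrow> real \<Rightarrow> real \<Rightarrow> real \<Rightarrow> real \<Rightarrow> (nat \<Rightarrow> real \<Rightarrow> cvec) \<Rightarrow> real^3
     \<Rightarrow> (nat \<Rightarrow> real \<Rightarrow> cvec) \<Rightarrow> real \<Rightarrow> real" where
  "HP p T muB g gamma psi w chi t =
     ((muB * g / (3 * 2 powr (real p - 1))) *\<^sub>R
       (\<Sum>l < 3 * 2 ^ p. set_lebesgue_integral lborel {t..T}
          (\<lambda>\<tau>. (gamma * exp (gamma * (t - \<tau>))) *\<^sub>R
                 (\<chi> i. Im (braket (ndim p) (chi l \<tau>) (\<lambda>a b. S1 p i a b + S2 p i a b) (psi l \<tau>))))))
     \<bullet> w"

end

theory Submission
  imports Defs
begin

definition herm :: "cmat \<Rightarrow> bool" where "herm M \<longleftrightarrow> (\<forall>a b. cnj (M b a) = M a b)"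

lemma herm_eye: "herm eye" by (simp add: herm_def eye_def)

lemma herm_half_pauli: "herm (half_pauli i)"
  unfolding herm_def half_pauli_def pauli_def by auto

lemma herm_kron: "herm A \<Longrightarrow> herm B \<Longrightarrow> herm (kron d A B)"
  unfolding herm_def kron_def by simp

lemma herm_S1: "herm (S1 p i)" unfolding S1_def by (intro herm_kron herm_eye herm_half_pauli)
lemma herm_S2: "herm (S2 p i)" unfolding S2_def by (intro herm_kron herm_eye herm_half_pauli)
lemma herm_Inuc: "herm (Inuc p j i)" unfolding Inuc_def by (intro herm_kron herm_eye herm_half_pauli)
lemma herm_PS: "herm (PS p)" unfolding PS_def herm_def kron_def eye_def by auto

lemma kron_eye_eye: "0 < d \<Longrightarrow> kron d eye eye x y = (if x = y then 1 else 0)"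
  unfolding kron_def eye_def
  by (cases "x = y") (auto, metis div_mult_mod_eq)

lemma S1_form:
  "S1 p i a b = (half_pauli i (a div 2 ^ p div 2) (b div 2 ^ p div 2) * (if a div 2^p mod 2 = b div 2^p mod 2 then 1 else 0))
      * (if a mod 2^p = b mod 2^p then 1 else 0)"
proof -
  have e: "(a mod 2^(p+1) = b mod 2^(p+1)) \<longleftrightarrow> (a div 2^p mod 2 = b div 2^p mod 2 \<and> a mod 2^p = b mod 2^p)"
  proof -
    have m0: "x mod (2^p*2) = 2^p * (x div 2^p mod 2) + x mod 2^p" for x :: nat
      by (rule mod_mult2_eq)
    have m: "x mod 2^(p+1) = 2^p * (x div 2^p mod 2) + x mod 2^p" for x :: nat
      using m0[of x] by (simp add: power_add mult.commute)
    have m1: "x mod 2^(p+1) div 2^p = x div 2^p mod 2" for x :: nat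
      unfolding m by simp
    have m2: "x mod 2^(p+1) mod 2^p = x mod 2^p" for x :: nat
      unfolding m by simp
    show ?thesis
    proof
      assume h: "a mod 2^(p+1) = b mod 2^(p+1)"
      have "a mod 2^(p+1) div 2^p = a div 2^p mod 2" "b mod 2^(p+1) div 2^p = b div 2^p mod 2"
        by (rule m1)+
      moreover have "a mod 2^(p+1) mod 2^p = a mod 2^p" "b mod 2^(p+1) mod 2^p = b mod 2^p"
        by (rule m2)+
      ultimately show "a div 2^p mod 2 = b div 2^p mod 2 \<and> a mod 2^p = b mod 2^p" using h by metis
    next
      assume h: "a div 2^p mod 2 = b div 2^p mod 2 \<and> a mod 2^p = b mod 2^p"
      have "2^p*(a div 2^p mod 2) + a mod 2^p = 2^p*(b div 2^p mod 2) + b mod 2^p"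
        using h by (simp only:)
      then show "a mod 2^(p+1) = b mod 2^(p+1)" by (simp only: m)
    qed
  qed
  have d: "x div 2^(p+1) = x div 2^p div 2" for x :: nat
    using div_mult2_eq[of x "2^p" 2] by (simp add: power_add mult.commute)
  have p2: "0 < (2::nat)^p" by simp
  have 1: "S1 p i a b = half_pauli i (a div 2^(p+1)) (b div 2^(p+1)) * (if a mod 2^(p+1) = b mod 2^(p+1) then 1 else 0)"
    unfolding S1_def kron_def[of "2^(p+1)"] by (simp only: kron_eye_eye[OF p2])
  have ic: "(if A \<and> B then (1::complex) else 0) = (if A then 1 else 0) * (if B then 1 else 0)" for A B
    by simp
  show ?thesis by (simp only: 1 d e ic mult.assoc)
qed

lemma Inuc_form:
  "Inuc p j i a b = (if a div 2^p = b div 2^p then 1 else 0) *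
       kron (2 ^ (p - j)) (kron 2 eye (half_pauli i)) eye (a mod 2^p) (b mod 2^p)"
  unfolding Inuc_def kron_def[of "2^p"] by (simp add: kron_eye_eye)

lemma sum_single_nat:
  fixes f :: "nat \<Rightarrow> complex"
  assumes "m0 < n" "\<And>m. m < n \<Longrightarrow> m \<noteq> m0 \<Longrightarrow> f m = 0"
  shows "(\<Sum>m<n. f m) = f m0"
  using assms by (subst sum.remove[of _ m0]) (auto intro!: sum.neutral)

lemma comm_lemma:
  fixes \<alpha> \<beta> :: "nat \<Rightarrow> nat \<Rightarrow> complex"
  assumes N: "0 < N" and a: "a < K*N" and b: "b < K*N"
  shows "(\<Sum>m<K*N. ((if a div N = m div N then 1 else 0) * \<beta> (a mod N) (m mod N)) *
                 (\<alpha> (m div N) (b div N) * (if m mod N = b mod N then 1 else 0)))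
       = (\<Sum>m<K*N. (\<alpha> (a div N) (m div N) * (if a mod N = m mod N then 1 else 0)) *
                 ((if m div N = b div N then 1 else 0) * \<beta> (m mod N) (b mod N)))"
proof -
  have bd: "x < K*N \<Longrightarrow> x div N < K" for x using N by (simp add: less_mult_imp_div_less)
  have lt: "y < K \<Longrightarrow> y * N + z mod N < K*N" for y z
  proof -
    assume "y < K"
    then have "Suc y * N \<le> K * N" by (intro mult_le_mono1) simp
    moreover have "z mod N < N" using N by simp
    ultimately show ?thesis by simp
  qed
  have L: "(\<Sum>m<K*N. ((if a div N = m div N then 1 else 0) * \<beta> (a mod N) (m mod N)) *
                 (\<alpha> (m div N) (b div N) * (if m mod N = b mod N then 1 else 0)))
          = \<beta> (a mod N) (b mod N) * \<alpha> (a div N) (b div N)"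
  proof (subst sum_single_nat[of "(a div N) * N + b mod N"])
    show "(a div N) * N + b mod N < K*N" using lt bd a by blast
  next
    fix m assume "m < K*N" "m \<noteq> a div N * N + b mod N"
    then have "\<not> (a div N = m div N \<and> m mod N = b mod N)"
      by (metis div_mult_mod_eq)
    then show "((if a div N = m div N then 1 else 0) * \<beta> (a mod N) (m mod N)) *
                 (\<alpha> (m div N) (b div N) * (if m mod N = b mod N then 1 else 0)) = 0" by auto
  next
    show "((if a div N = (a div N * N + b mod N) div N then 1 else 0) * \<beta> (a mod N) ((a div N * N + b mod N) mod N)) *
     (\<alpha> ((a div N * N + b mod N) div N) (b div N) * (if (a div N * N + b mod N) mod N = b mod N then 1 else 0)) =
    \<beta> (a mod N) (b mod N) * \<alpha> (a div N) (b div N)" using N by simp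
  qed
  have R: "(\<Sum>m<K*N. (\<alpha> (a div N) (m div N) * (if a mod N = m mod N then 1 else 0)) *
                 ((if m div N = b div N then 1 else 0) * \<beta> (m mod N) (b mod N)))
          = \<beta> (a mod N) (b mod N) * \<alpha> (a div N) (b div N)"
  proof (subst sum_single_nat[of "(b div N) * N + a mod N"])
    show "(b div N) * N + a mod N < K*N" using lt bd b by blast
  next
    fix m assume "m < K*N" "m \<noteq> b div N * N + a mod N"
    then have "\<not> (m div N = b div N \<and> a mod N = m mod N)"
      by (metis div_mult_mod_eq)
    then show "(\<alpha> (a div N) (m div N) * (if a mod N = m mod N then 1 else 0)) *
                 ((if m div N = b div N then 1 else 0) * \<beta> (m mod N) (b mod N)) = 0" by auto
  next
    show "\<alpha> (a div N) ((b div N * N + a mod N) div N) * (if a mod N = (b div N * N + a mod N) mod N then 1 else 0) *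
    ((if (b div N * N + a mod N) div N = b div N then 1 else 0) * \<beta> ((b div N * N + a mod N) mod N) (b mod N)) =
    \<beta> (a mod N) (b mod N) * \<alpha> (a div N) (b div N)" using N by simp
  qed
  show ?thesis using L R by simp
qed

lemma ndim_eq: "ndim p = 4 * 2^p" by (simp add: ndim_def power_add)

lemma Inuc_S1_comm:
  assumes "a < ndim p" "b < ndim p"
  shows "mmul (ndim p) (Inuc p j i) (S1 p i') a b = mmul (ndim p) (S1 p i') (Inuc p j i) a b"
proof -
  let ?\<alpha> = "\<lambda>x y. half_pauli i' (x div 2) (y div 2) * (if x mod 2 = y mod 2 then 1 else 0)"
  let ?\<beta> = "\<lambda>x y. kron (2 ^ (p - j)) (kron 2 eye (half_pauli i)) eye x y"
  have eq1: "mmul (ndim p) (Inuc p j i) (S1 p i') a b =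
     (\<Sum>m<4*2^p. ((if a div 2^p = m div 2^p then 1 else 0) * ?\<beta> (a mod 2^p) (m mod 2^p)) *
                 (?\<alpha> (m div 2^p) (b div 2^p) * (if m mod 2^p = b mod 2^p then 1 else 0)))"
    unfolding mmul_def ndim_eq by (intro sum.cong refl) (simp only: S1_form Inuc_form)
  have eq2: "mmul (ndim p) (S1 p i') (Inuc p j i) a b =
     (\<Sum>m<4*2^p. (?\<alpha> (a div 2^p) (m div 2^p) * (if a mod 2^p = m mod 2^p then 1 else 0)) *
                 ((if m div 2^p = b div 2^p then 1 else 0) * ?\<beta> (m mod 2^p) (b mod 2^p)))"
    unfolding mmul_def ndim_eq by (intro sum.cong refl) (simp only: S1_form Inuc_form)
  have a4: "a < 4 * 2^p" "b < 4*2^p" using assms by (simp_all add: ndim_eq)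
  show ?thesis unfolding eq1 eq2
    by (rule comm_lemma[of "2^p" a 4 b ?\<beta> ?\<alpha>, OF _ a4]) simp
qed

lemma herm_on_mmul_IS:
  assumes "a < ndim p" "b < ndim p"
  shows "cnj (mmul (ndim p) (Inuc p j i) (S1 p i) b a) = mmul (ndim p) (Inuc p j i) (S1 p i) a b"
proof -
  have "cnj (mmul (ndim p) (Inuc p j i) (S1 p i) b a) = mmul (ndim p) (S1 p i) (Inuc p j i) a b"
    unfolding mmul_def
  proof (subst cnj_sum, intro sum.cong refl)
    fix m
    have "cnj (Inuc p j i b m) = Inuc p j i m b" "cnj (S1 p i m a) = S1 p i a m"
      using herm_S1[of p i] herm_Inuc[of p j i] unfolding herm_def by blast+
    then show "cnj (Inuc p j i b m * S1 p i m a) = S1 p i a m * Inuc p j i m b"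
      by (simp only: complex_cnj_mult mult.commute)
  qed
  also have "\<dots> = mmul (ndim p) (Inuc p j i) (S1 p i) a b" using Inuc_S1_comm[OF assms] by simp
  finally show ?thesis .
qed

lemma herm_HZ: "cnj (HZ p muB g v b a) = HZ p muB g v a b"
  using herm_S1 herm_S2 unfolding HZ_def herm_def by simp

lemma herm_Hhfi: "a < ndim p \<Longrightarrow> b < ndim p \<Longrightarrow> cnj (Hhfi p muB g A b a) = Hhfi p muB g A a b"
  unfolding Hhfi_def using herm_on_mmul_IS by simp

lemma herm_K: "cnj (Kmat p kS kT b a) = Kmat p kS kT a b"
  using herm_PS unfolding Kmat_def PT_def herm_def eye_def by auto

lemma Hstar_adj: "a < ndim p \<Longrightarrow> b < ndim p \<Longrightarrow>
   cnj (Hstar p muB g A kS kT v b a) = Hfull p muB g A kS kT v a b"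
  unfolding Hstar_def Hfull_def using herm_HZ herm_Hhfi herm_K by simp


definition ip :: "nat \<Rightarrow> cvec \<Rightarrow> cvec \<Rightarrow> complex" where
  "ip n x y = (\<Sum>k<n. cnj (x k) * y k)"

lemma braket_ip: "braket n a M b = ip n a (mvmul n M b)"
  by (simp add: braket_def ip_def mvmul_def sum_distrib_left mult.assoc)

lemma ip_cnj: "cnj (ip n x y) = ip n y x"
  by (simp add: ip_def mult.commute)

lemma ip_adj:
  assumes "\<forall>a<n. \<forall>b<n. cnj (M' b a) = M a b"
  shows "ip n (mvmul n M' x) y = ip n x (mvmul n M y)"
proof -
  have "ip n (mvmul n M' x) y = (\<Sum>k<n. \<Sum>m<n. cnj (M' k m) * cnj (x m) * y k)"
    by (simp add: ip_def mvmul_def sum_distrib_right)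
  also have "\<dots> = (\<Sum>k<n. \<Sum>m<n. M m k * cnj (x m) * y k)"
    using assms by (intro sum.cong refl) auto
  also have "\<dots> = (\<Sum>m<n. \<Sum>k<n. M m k * cnj (x m) * y k)"
    by (rule sum.swap)
  also have "\<dots> = ip n x (mvmul n M y)"
    by (simp add: ip_def mvmul_def sum_distrib_left mult_ac)
  finally show ?thesis .
qed

lemma ip_deriv:
  assumes "\<And>k. k < n \<Longrightarrow> ((\<lambda>s. x s k) has_vector_derivative x' k) (at t within S)"
      "\<And>k. k < n \<Longrightarrow> ((\<lambda>s. y s k) has_vector_derivative y' k) (at t within S)"
  shows "((\<lambda>s. ip n (x s) (y s)) has_vector_derivative (ip n x' (y t) + ip n (x t) y')) (at t within S)"
proof -
  have "((\<lambda>s. \<Sum>k<n. cnj (x s k) * y s k) has_vector_derivative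
          (\<Sum>k<n. cnj (x t k) * y' k + cnj (x' k) * y t k)) (at t within S)"
    by (auto intro!: has_vector_derivative_sum has_vector_derivative_mult has_vector_derivative_cnj assms)
  then show ?thesis unfolding ip_def by (simp add: sum.distrib add.commute)
qed

lemma ip_cont:
  assumes "\<And>k. k < n \<Longrightarrow> continuous_on S (\<lambda>s. x s k)" "\<And>k. k < n \<Longrightarrow> continuous_on S (\<lambda>s. y s k)"
  shows "continuous_on S (\<lambda>s. ip n (x s) (y s))"
  unfolding ip_def using assms by (auto intro!: continuous_intros)

lemma mvmul_cont:
  assumes "\<And>a b. a < n \<Longrightarrow> b < n \<Longrightarrow> continuous_on S (\<lambda>s. M s a b)" "\<And>k. k < n \<Longrightarrow> continuous_on S (\<lambda>s. y s k)"
    "k < n"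
  shows "continuous_on S (\<lambda>s. mvmul n (M s) (y s) k)"
  unfolding mvmul_def using assms by (auto intro!: continuous_intros)

lemma mvmul_bound:
  assumes "\<And>m. m < n \<Longrightarrow> cmod (M k m) \<le> C" "\<And>m. m < n \<Longrightarrow> cmod (y m) \<le> c" "0 \<le> C"
  shows "cmod (mvmul n M y k) \<le> n * C * c"
proof -
  have "cmod (mvmul n M y k) \<le> (\<Sum>m<n. cmod (M k m) * cmod (y m))"
    unfolding mvmul_def by (rule order_trans[OF norm_sum]) (simp add: norm_mult)
  also have "\<dots> \<le> (\<Sum>m<n. C * c)"
    by (intro sum_mono mult_mono assms) auto
  finally show ?thesis by simp
qed

lemma ip_mv_bound:
  assumes "\<And>k. k < n \<Longrightarrow> cmod (x k) \<le> cx" "\<And>a b. a < n \<Longrightarrow> b < n \<Longrightarrow> cmod (M a b) \<le> C"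
    "\<And>m. m < n \<Longrightarrow> cmod (y m) \<le> c" "0 \<le> C" "0 \<le> c" "0 \<le> cx"
  shows "cmod (ip n x (mvmul n M y)) \<le> n * cx * (n * C * c)"
proof -
  have "cmod (ip n x (mvmul n M y)) \<le> (\<Sum>k<n. cmod (x k) * cmod (mvmul n M y k))"
    unfolding ip_def by (rule order_trans[OF norm_sum]) (simp add: norm_mult)
  also have "\<dots> \<le> (\<Sum>k<n. cx * (n * C * c))"
    by (intro sum_mono mult_mono assms mvmul_bound) auto
  finally show ?thesis by simp
qed

lemma gronwall_lin:
  fixes N N' :: "real \<Rightarrow> real"
  assumes der: "\<forall>t\<in>{0..T}. (N has_real_derivative N' t) (at t within {0..T})"
    and le: "\<forall>t\<in>{0..T}. N' t \<le> \<alpha> * N t + \<beta>"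
    and N0: "N 0 \<le> 0" and a: "0 \<le> \<alpha>" and b: "0 \<le> \<beta>" and t: "t \<in> {0..T}"
  shows "N t \<le> \<beta> * t * exp (\<alpha> * t)"
proof -
  define g where "g s = exp (- \<alpha> * s) * N s - \<beta> * s" for s
  have gder: "(g has_real_derivative (exp (- \<alpha> * s) * N' s - \<alpha> * exp (- \<alpha> * s) * N s - \<beta>)) (at s within {0..T})"
    if "s \<in> {0..T}" for s
    unfolding g_def using der that
    by (auto intro!: derivative_eq_intros simp: algebra_simps)
  have t0: "0 \<le> t" using t by simp
  have gc: "continuous_on {0..t} g"
      by (rule continuous_on_subset[of "{0..T}"])
         (use gder t in \<open>auto intro!: DERIV_continuous_on[where D="\<lambda>s. exp (- \<alpha> * s) * N' s - \<alpha> * exp (- \<alpha> * s) * N s - \<beta>"]\<close>)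
  have gd: "\<exists>y. (g has_real_derivative y) (at x) \<and> y \<le> 0" if x: "0 < x" "x < t" for x
  proof -
    have xi: "x \<in> interior {0..T}" using t x by auto
    have "(g has_real_derivative (exp (- \<alpha> * x) * N' x - \<alpha> * exp (- \<alpha> * x) * N x - \<beta>)) (at x)"
      using gder[of x] x t at_within_interior[OF xi] by auto
    moreover have "exp (- \<alpha> * x) * N' x - \<alpha> * exp (- \<alpha> * x) * N x - \<beta> \<le> 0"
    proof -
      have e0: "0 < exp (- \<alpha> * x)" by simp
      have e1: "exp (- \<alpha> * x) \<le> 1" using a x by simp
      have "exp (- \<alpha> * x) * N' x \<le> exp (- \<alpha> * x) * (\<alpha> * N x + \<beta>)"
        using le x t e0 by (intro mult_left_mono) auto
      moreover have "exp (- \<alpha> * x) * \<beta> \<le> \<beta>" using e1 b by (simp add: mult_left_le_one_le)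
      ultimately show ?thesis by (simp add: algebra_simps)
    qed
    ultimately show ?thesis by blast
  qed
  have "g t \<le> g 0" using DERIV_nonpos_imp_decreasing_open[of 0 t g, OF t0 gd gc] by simp
  then have "exp (- \<alpha> * t) * N t \<le> \<beta> * t" unfolding g_def using N0 by simp
  then have "exp (\<alpha> * t) * (exp (- \<alpha> * t) * N t) \<le> exp (\<alpha> * t) * (\<beta> * t)"
    by (intro mult_left_mono) auto
  then show ?thesis by (simp add: exp_minus field_simps)
qed


definition Kdc :: "nat \<Rightarrow> real \<Rightarrow> real \<Rightarrow> real \<Rightarrow> real \<Rightarrow> real \<Rightarrow> real" where
  "Kdc n T hbar C1 CZ Psi = sqrt ((2 * real n * (real n * CZ * Psi)^2 / hbar^2) * T *
      exp ((1 + 2 * real n ^ 3 * C1^2 / hbar^2) * T))"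

lemma Re_cnj_mult_self: "Re (cnj z * z) = (cmod z)^2"
  using cmod_power2[of z] by (simp add: power2_eq_square)

lemma sq_sum_le: "(x+y)^2 \<le> 2*(x^2+y^2)" for x y :: real
  using sum_squares_bound[of x y] by (simp add: power2_sum)
lemma two_mul_le: "2*(x*y) \<le> x^2+y^2" for x y :: real
  using sum_squares_bound[of x y] by (simp add: mult.assoc)
lemma cmod_add_scale_le:
  fixes a b :: complex and e A B :: real
  assumes "cmod a \<le> A" "cmod b \<le> B" "0 < e"
  shows "cmod (a + of_real e * b) \<le> A + e * B"
proof -
  have "cmod (a + of_real e * b) \<le> cmod a + e * cmod b"
    using norm_triangle_ineq[of a "of_real e * b"] assms(3) by (simp add: norm_mult)
  also have "\<dots> \<le> A + e * B" using assms by (intro add_mono mult_left_mono) auto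
  finally show ?thesis .
qed

lemma D_bound:
  fixes D psi :: "real \<Rightarrow> cvec" and He Z :: "real \<Rightarrow> cmat"
  assumes hb: "0 < hbar" and eps: "0 < \<epsilon>" "\<epsilon> \<le> 1"
    and dD: "\<forall>t\<in>{0..T}. \<forall>k<n. ((\<lambda>s. D s k) has_vector_derivative
        (mvmul n (He t) (D t) k + of_real \<epsilon> * mvmul n (Z t) (psi t) k) / (\<i> * of_real hbar)) (at t within {0..T})"
    and D0: "\<forall>k<n. D 0 k = 0"
    and bHe: "\<forall>t\<in>{0..T}. \<forall>a<n. \<forall>b<n. cmod (He t a b) \<le> C1"
    and bZ: "\<forall>t\<in>{0..T}. \<forall>a<n. \<forall>b<n. cmod (Z t a b) \<le> CZ"
    and bpsi: "\<forall>t\<in>{0..T}. \<forall>k<n. cmod (psi t k) \<le> Psi"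
    and C1: "0 \<le> C1" and CZ: "0 \<le> CZ" and Psi: "0 \<le> Psi"
  shows "\<forall>t\<in>{0..T}. \<forall>k<n. cmod (D t k) \<le> \<epsilon> * Kdc n T hbar C1 CZ Psi"
proof (intro ballI allI impI)
  fix t k assume t: "t \<in> {0..T}" and k: "k < n"
  define D' where "D' t k = (mvmul n (He t) (D t) k + of_real \<epsilon> * mvmul n (Z t) (psi t) k) / (\<i> * of_real hbar)" for t k
  define N where "N s = Re (ip n (D s) (D s))" for s
  define B where "B = real n * CZ * Psi"
  define \<alpha> where "\<alpha> = 1 + 2 * real n ^ 3 * C1^2 / hbar^2"
  define \<beta> where "\<beta> = \<epsilon>^2 * (2 * real n * B^2 / hbar^2)"
  have Nsum: "N s = (\<Sum>k<n. (cmod (D s k))^2)" for s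
    unfolding N_def ip_def by (simp only: Re_sum Re_cnj_mult_self)
  have Nnn: "0 \<le> N s" for s unfolding Nsum by (simp add: sum_nonneg)
  have Dk_le: "cmod (D s k) \<le> sqrt (N s)" if "k < n" for s k
  proof -
    have "(cmod (D s k))^2 \<le> N s" unfolding Nsum
      using that by (intro member_le_sum) auto
    then show ?thesis by (simp add: real_le_rsqrt)
  qed
  have Nder: "(N has_real_derivative Re (ip n (D' s) (D s) + ip n (D s) (D' s))) (at s within {0..T})"
    if s: "s \<in> {0..T}" for s
  proof -
    have "((\<lambda>s. ip n (D s) (D s)) has_vector_derivative (ip n (D' s) (D s) + ip n (D s) (D' s))) (at s within {0..T})"
      by (rule ip_deriv) (use dD s in \<open>auto simp: D'_def\<close>)
    from bounded_linear.has_vector_derivative[OF bounded_linear_Re this]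
    show ?thesis unfolding N_def has_real_derivative_iff_has_vector_derivative by simp
  qed
  have D'b: "cmod (D' s k) \<le> (real n * C1 * sqrt (N s) + \<epsilon> * B) / hbar" if s: "s \<in> {0..T}" and k: "k < n" for s k
  proof -
    have "cmod (mvmul n (He s) (D s) k) \<le> real n * C1 * sqrt (N s)"
      by (rule mvmul_bound) (use bHe s k Dk_le C1 in auto)
    moreover have "cmod (mvmul n (Z s) (psi s) k) \<le> B"
      unfolding B_def by (rule mvmul_bound) (use bZ s k bpsi CZ in auto)
    ultimately have "cmod (mvmul n (He s) (D s) k + of_real \<epsilon> * mvmul n (Z s) (psi s) k) \<le> real n * C1 * sqrt (N s) + \<epsilon> * B"
      using eps by (intro cmod_add_scale_le) auto
    moreover have "cmod (\<i> * of_real hbar) = hbar" using hb by (simp add: norm_mult)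
    ultimately show ?thesis unfolding D'_def using hb by (simp add: norm_divide divide_right_mono)
  qed
  have Nle: "Re (ip n (D' s) (D s) + ip n (D s) (D' s)) \<le> \<alpha> * N s + \<beta>" if s: "s \<in> {0..T}" for s
  proof -
    have "Re (ip n (D' s) (D s) + ip n (D s) (D' s)) \<le> cmod (ip n (D' s) (D s)) + cmod (ip n (D s) (D' s))"
      by (metis complex_Re_le_cmod norm_triangle_ineq order_trans)
    also have "\<dots> \<le> (\<Sum>k<n. cmod (D' s k) * cmod (D s k)) + (\<Sum>k<n. cmod (D s k) * cmod (D' s k))"
      unfolding ip_def by (intro add_mono order_trans[OF norm_sum]) (simp_all add: norm_mult)
    also have "\<dots> = (\<Sum>k<n. 2 * (cmod (D' s k) * cmod (D s k)))"
      unfolding sum.distrib[symmetric] by (intro sum.cong refl) (simp add: mult.commute)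
    also have "\<dots> \<le> (\<Sum>k<n. (cmod (D' s k))^2 + (cmod (D s k))^2)"
      by (intro sum_mono two_mul_le)
    also have "\<dots> = (\<Sum>k<n. (cmod (D' s k))^2) + N s"
      by (simp add: Nsum sum.distrib)
    also have "(\<Sum>k<n. (cmod (D' s k))^2) \<le> (\<Sum>k<n. 2 * ((real n * C1)^2 * N s + (\<epsilon> * B)^2) / hbar^2)"
    proof (intro sum_mono)
      fix k assume "k \<in> {..<n}"
      then have "cmod (D' s k) \<le> (real n * C1 * sqrt (N s) + \<epsilon> * B) / hbar" using D'b s by auto
      then have "(cmod (D' s k))^2 \<le> ((real n * C1 * sqrt (N s) + \<epsilon> * B) / hbar)^2"
        by (intro power_mono) auto
      also have "\<dots> = (real n * C1 * sqrt (N s) + \<epsilon> * B)^2 / hbar^2" by (simp add: power_divide)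
      also have "\<dots> \<le> 2 * ((real n * C1)^2 * N s + (\<epsilon> * B)^2) / hbar^2"
      proof (intro divide_right_mono)
        have "(real n * C1 * sqrt (N s) + \<epsilon> * B)^2 \<le> 2 * ((real n * C1 * sqrt (N s))^2 + (\<epsilon> * B)^2)"
          by (rule sq_sum_le)
        also have "(real n * C1 * sqrt (N s))^2 = (real n * C1)^2 * N s"
          using Nnn[of s] by (simp add: power_mult_distrib)
        finally show "(real n * C1 * sqrt (N s) + \<epsilon> * B)\<^sup>2 \<le> 2 * ((real n * C1)\<^sup>2 * N s + (\<epsilon> * B)\<^sup>2)" .
      qed simp
      finally show "(cmod (D' s k))^2 \<le> 2 * ((real n * C1)^2 * N s + (\<epsilon> * B)^2) / hbar^2" .
    qed
    also have "(\<Sum>k<n. 2 * ((real n * C1)^2 * N s + (\<epsilon> * B)^2) / hbar^2) + N s = \<alpha> * N s + \<beta>"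
      unfolding \<alpha>_def \<beta>_def using hb by (simp add: field_simps power2_eq_square power3_eq_cube)
    finally show ?thesis by simp
  qed
  have a0: "0 \<le> \<alpha>" unfolding \<alpha>_def using C1 by (simp add: add_nonneg_nonneg)
  have b0: "0 \<le> \<beta>" unfolding \<beta>_def by simp
  have N0: "N 0 \<le> 0" unfolding Nsum using D0 by simp
  have "N t \<le> \<beta> * t * exp (\<alpha> * t)"
    using gronwall_lin[where N=N and N'="\<lambda>s. Re (ip n (D' s) (D s) + ip n (D s) (D' s))" and T=T and \<alpha>=\<alpha> and \<beta>=\<beta> and t=t] Nder Nle N0 a0 b0 t
    by blast
  also have "\<dots> \<le> \<beta> * T * exp (\<alpha> * T)"
    using t a0 b0 by (intro mult_mono) (auto intro: mult_left_mono)
  also have "\<dots> = \<epsilon>^2 * ((2 * real n * B^2 / hbar^2) * T * exp (\<alpha> * T))"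
    unfolding \<beta>_def by simp
  finally have "sqrt (N t) \<le> sqrt (\<epsilon>^2 * ((2 * real n * B^2 / hbar^2) * T * exp (\<alpha> * T)))"
    by simp
  also have "\<dots> = \<epsilon> * sqrt ((2 * real n * B^2 / hbar^2) * T * exp (\<alpha> * T))"
    using eps by (subst real_sqrt_mult) simp
  also have "\<dots> = \<epsilon> * Kdc n T hbar C1 CZ Psi"
    unfolding Kdc_def B_def \<alpha>_def ..
  finally show "cmod (D t k) \<le> \<epsilon> * Kdc n T hbar C1 CZ Psi" using Dk_le[OF k, of t] by simp
qed


lemma ip_add_left: "ip n (\<lambda>k. x k + y k) z = ip n x z + ip n y z"
  by (simp add: ip_def sum.distrib ring_distribs)
lemma ip_add_right: "ip n x (\<lambda>k. y k + z k) = ip n x y + ip n x z"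
  by (simp add: ip_def sum.distrib ring_distribs)
lemma mvmul_add: "mvmul n M (\<lambda>m. x m + y m) k = mvmul n M x k + mvmul n M y k"
  by (simp add: mvmul_def sum.distrib ring_distribs)

lemma mv_id:
  "mvmul n (\<lambda>a b. H a b + e * Z a b) x k - mvmul n H y k
     = mvmul n H (\<lambda>m. x m - y m) k + e * mvmul n Z x k"
  by (simp add: mvmul_def sum_distrib_left sum_subtractf[symmetric] sum.distrib[symmetric] algebra_simps)

lemma mv_id2:
  "mvmul n (\<lambda>a b. H a b + e * Z a b) x k - mvmul n H y k
     = mvmul n (\<lambda>a b. H a b + e * Z a b) (\<lambda>m. x m - y m) k + e * mvmul n Z y k"
  by (simp add: mvmul_def sum_distrib_left sum_subtractf[symmetric] sum.distrib[symmetric] algebra_simps)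

lemma ip_lin_left: "ip n (\<lambda>k. (a k - c * b k) / w) y = (ip n a y - cnj c * ip n b y) / cnj w"
  by (simp add: ip_def sum_divide_distrib sum_subtractf sum_distrib_left algebra_simps diff_divide_distrib)

lemma ip_lin_right: "ip n x (\<lambda>k. (a k + c * b k) / w) = (ip n x a + c * ip n x b) / w"
  by (simp add: ip_def sum_divide_distrib sum.distrib sum_distrib_left algebra_simps add_divide_distrib)

definition Qc :: "nat \<Rightarrow> real \<Rightarrow> real \<Rightarrow> real \<Rightarrow> real \<Rightarrow> real \<Rightarrow> real \<Rightarrow> real \<Rightarrow> real \<Rightarrow> real" where
  "Qc n T hbar kS CH CZ CP Psi X =
     (let Kd = Kdc n T hbar (CH + CZ) CZ Psi in
       (4 / kS) * T * (real n * X * (real n * CZ * Kd)) + T * (real n * Kd * (real n * CP * Kd)))"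

lemma core:
  fixes psi phi chi :: "real \<Rightarrow> cvec" and H Hs Z :: "real \<Rightarrow> cmat" and P :: cmat
  assumes T: "0 < T" and hb: "0 < hbar" and kS: "0 < kS" and eps: "0 < \<epsilon>" "\<epsilon> \<le> 1"
  and dpsi: "\<forall>t\<in>{0..T}. \<forall>k<n. ((\<lambda>s. psi s k) has_vector_derivative
        mvmul n (H t) (psi t) k / (\<i> * of_real hbar)) (at t within {0..T})"
  and dphi: "\<forall>t\<in>{0..T}. \<forall>k<n. ((\<lambda>s. phi s k) has_vector_derivative
        mvmul n (\<lambda>a b. H t a b + of_real \<epsilon> * Z t a b) (phi t) k / (\<i> * of_real hbar)) (at t within {0..T})"
  and init: "\<forall>k<n. phi 0 k = psi 0 k"
  and chiT: "\<forall>k<n. chi T k = 0"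
  and chic: "\<forall>k<n. continuous_on {0..T} (\<lambda>s. chi s k)"
  and dchi: "\<forall>t\<in>{0..<T}. \<forall>k<n. ((\<lambda>s. chi s k) has_vector_derivative
        (mvmul n (Hs t) (chi t) k - \<i> * of_real (kS / 2) * mvmul n P (psi t) k) / (\<i> * of_real hbar))
        (at t within {0..T})"
  and adjH: "\<forall>t\<in>{0..T}. \<forall>a<n. \<forall>b<n. cnj (Hs t b a) = H t a b"
  and adjP: "\<forall>a<n. \<forall>b<n. cnj (P b a) = P a b"
  and bH: "\<forall>t\<in>{0..T}. \<forall>a<n. \<forall>b<n. cmod (H t a b) \<le> CH"
  and bZ: "\<forall>t\<in>{0..T}. \<forall>a<n. \<forall>b<n. cmod (Z t a b) \<le> CZ"
  and bP: "\<forall>a<n. \<forall>b<n. cmod (P a b) \<le> CP"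
  and bpsi: "\<forall>t\<in>{0..T}. \<forall>k<n. cmod (psi t k) \<le> Psi"
  and bchi: "\<forall>t\<in>{0..T}. \<forall>k<n. cmod (chi t k) \<le> X"
  and nn: "0 \<le> CH" "0 \<le> CZ" "0 \<le> CP" "0 \<le> Psi" "0 \<le> X"
  and Jphi: "((\<lambda>t. Re (braket n (phi t) P (phi t))) has_integral Jphi) {0..T}"
  and Jpsi: "((\<lambda>t. Re (braket n (psi t) P (psi t))) has_integral Jpsi) {0..T}"
  and Lint: "((\<lambda>t. Im (ip n (chi t) (mvmul n (Z t) (psi t)))) has_integral L) {0..T}"
  shows "\<epsilon> * (4 / kS) * L - \<epsilon>^2 * Qc n T hbar kS CH CZ CP Psi X \<le> Jphi - Jpsi"
proof -
  define D where "D s k = phi s k - psi s k" for s k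
  define He where "He t = (\<lambda>a b. H t a b + of_real \<epsilon> * Z t a b)" for t
  define Kd where "Kd = Kdc n T hbar (CH + CZ) CZ Psi"
  have Kd0: "0 \<le> Kd" unfolding Kd_def Kdc_def using T nn by simp
  have phiD: "phi t = (\<lambda>k. psi t k + D t k)" for t unfolding D_def by simp
  have dD: "((\<lambda>s. D s k) has_vector_derivative
        (mvmul n (He t) (D t) k + of_real \<epsilon> * mvmul n (Z t) (psi t) k) / (\<i> * of_real hbar)) (at t within {0..T})"
    if t: "t \<in> {0..T}" and k: "k < n" for t k
  proof -
    have "((\<lambda>s. D s k) has_vector_derivative
        mvmul n (He t) (phi t) k / (\<i> * of_real hbar) - mvmul n (H t) (psi t) k / (\<i> * of_real hbar)) (at t within {0..T})"
      unfolding D_def He_def using dphi dpsi t k by (intro has_vector_derivative_diff) auto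
    also have "mvmul n (He t) (phi t) k / (\<i> * of_real hbar) - mvmul n (H t) (psi t) k / (\<i> * of_real hbar)
       = (mvmul n (He t) (D t) k + of_real \<epsilon> * mvmul n (Z t) (psi t) k) / (\<i> * of_real hbar)"
      unfolding He_def D_def diff_divide_distrib[symmetric] by (subst mv_id2) (simp add: D_def)
    finally show ?thesis .
  qed
  have dD2: "((\<lambda>s. D s k) has_vector_derivative
        (mvmul n (H t) (D t) k + of_real \<epsilon> * mvmul n (Z t) (phi t) k) / (\<i> * of_real hbar)) (at t within {0..T})"
    if t: "t \<in> {0..T}" and k: "k < n" for t k
  proof -
    have "((\<lambda>s. D s k) has_vector_derivative
        mvmul n (He t) (phi t) k / (\<i> * of_real hbar) - mvmul n (H t) (psi t) k / (\<i> * of_real hbar)) (at t within {0..T})"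
      unfolding D_def He_def using dphi dpsi t k by (intro has_vector_derivative_diff) auto
    also have "mvmul n (He t) (phi t) k / (\<i> * of_real hbar) - mvmul n (H t) (psi t) k / (\<i> * of_real hbar)
       = (mvmul n (H t) (D t) k + of_real \<epsilon> * mvmul n (Z t) (phi t) k) / (\<i> * of_real hbar)"
      unfolding He_def D_def diff_divide_distrib[symmetric] by (subst mv_id) (simp add: D_def)
    finally show ?thesis .
  qed
  have bHe: "\<forall>t\<in>{0..T}. \<forall>a<n. \<forall>b<n. cmod (He t a b) \<le> CH + CZ"
  proof (intro ballI allI impI)
    fix t a b assume "t \<in> {0..T}" "a < n" "b < n"
    then have "cmod (H t a b) \<le> CH" "cmod (Z t a b) \<le> CZ" using bH bZ by auto
    then have "cmod (He t a b) \<le> CH + \<epsilon> * CZ" unfolding He_def using eps by (intro cmod_add_scale_le) auto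
    also have "\<dots> \<le> CH + CZ" using eps nn by (simp add: mult_left_le_one_le)
    finally show "cmod (He t a b) \<le> CH + CZ" .
  qed
  have Db: "\<forall>t\<in>{0..T}. \<forall>k<n. cmod (D t k) \<le> \<epsilon> * Kd"
  proof -
    have D0: "\<forall>k<n. D 0 k = 0" using init by (simp add: D_def)
    have dDall: "\<forall>t\<in>{0..T}. \<forall>k<n. ((\<lambda>s. D s k) has_vector_derivative
        (mvmul n (He t) (D t) k + of_real \<epsilon> * mvmul n (Z t) (psi t) k) / (\<i> * of_real hbar)) (at t within {0..T})"
      using dD by blast
    have "0 \<le> CH + CZ" using nn by simp
    from D_bound[OF hb eps dDall D0 bHe bZ bpsi this nn(2) nn(4)]
    show ?thesis unfolding Kd_def .
  qed
  have Dcont: "continuous_on {0..T} (\<lambda>s. D s k)" if "k < n" for k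
    by (rule continuous_on_vector_derivative) (use dD that in blast)
  have psicont: "continuous_on {0..T} (\<lambda>s. psi s k)" if "k < n" for k
    by (rule continuous_on_vector_derivative) (use dpsi that in blast)
  define A1 where "A1 t = ip n (chi t) (mvmul n (Z t) (phi t))" for t
  define A2 where "A2 t = ip n (mvmul n P (psi t)) (D t)" for t
  define g' where "g' t = (of_real \<epsilon> * A1 t - \<i> * of_real (kS / 2) * A2 t) / (\<i> * of_real hbar)" for t
  have gder: "((\<lambda>s. ip n (chi s) (D s)) has_vector_derivative g' t) (at t)" if t: "t \<in> {0<..<T}" for t
  proof -
    have ti: "t \<in> interior {0..T}" using t by simp
    have tt: "t \<in> {0..T}" "t \<in> {0..<T}" using t by auto
    have "((\<lambda>s. ip n (chi s) (D s)) has_vector_derivative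
       (ip n (\<lambda>k. (mvmul n (Hs t) (chi t) k - \<i> * of_real (kS / 2) * mvmul n P (psi t) k) / (\<i> * of_real hbar)) (D t)
        + ip n (chi t) (\<lambda>k. (mvmul n (H t) (D t) k + of_real \<epsilon> * mvmul n (Z t) (phi t) k) / (\<i> * of_real hbar))))
       (at t within {0..T})"
      by (rule ip_deriv) (use dchi dD2 tt in auto)
    also have "(ip n (\<lambda>k. (mvmul n (Hs t) (chi t) k - \<i> * of_real (kS / 2) * mvmul n P (psi t) k) / (\<i> * of_real hbar)) (D t)
        + ip n (chi t) (\<lambda>k. (mvmul n (H t) (D t) k + of_real \<epsilon> * mvmul n (Z t) (phi t) k) / (\<i> * of_real hbar))) = g' t"
    proof -
      have a1: "ip n (mvmul n (Hs t) (chi t)) (D t) = ip n (chi t) (mvmul n (H t) (D t))"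
        by (rule ip_adj) (use adjH tt in auto)
      have a2: "ip n (mvmul n P (psi t)) (D t) = A2 t" unfolding A2_def ..
      show ?thesis
        unfolding ip_lin_left ip_lin_right a1 a2 g'_def A1_def using hb
        by (simp add: field_simps)
    qed
    finally show ?thesis using at_within_interior[OF ti] by simp
  qed
  have gcont: "continuous_on {0..T} (\<lambda>s. ip n (chi s) (D s))"
    by (rule ip_cont) (use chic Dcont in auto)
  have "(g' has_integral (ip n (chi T) (D T) - ip n (chi 0) (D 0))) {0..T}"
    by (rule fundamental_theorem_of_calculus_interior) (use T gcont gder in auto)
  moreover have "ip n (chi T) (D T) = 0" unfolding ip_def using chiT by simp
  moreover have "ip n (chi 0) (D 0) = 0" unfolding ip_def D_def using init by simp
  ultimately have g'int: "(g' has_integral 0) {0..T}" by simp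
  have A2cont: "continuous_on {0..T} A2"
    unfolding A2_def
    by (intro ip_cont mvmul_cont) (use psicont Dcont in auto)
  obtain I2 where I2: "(A2 has_integral I2) {0..T}"
    using integrable_continuous_interval[OF A2cont] by blast
  have A1eq: "A1 t = (1 / of_real \<epsilon>) * ((\<i> * of_real hbar) * g' t + \<i> * of_real (kS / 2) * A2 t)" for t
    unfolding g'_def using eps hb by (simp add: field_simps)
  have I1: "(A1 has_integral (1 / of_real \<epsilon>) * ((\<i> * of_real hbar) * 0 + \<i> * of_real (kS / 2) * I2)) {0..T}"
    unfolding A1eq
    by (intro has_integral_mult_right has_integral_add g'int I2)
  define I1 where "I1 = (1 / of_real \<epsilon>) * ((\<i> * of_real hbar) * 0 + \<i> * of_real (kS / 2) * (I2::complex))"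
  have ReI2: "Re I2 = (2 * \<epsilon> / kS) * Im I1"
    unfolding I1_def using eps kS by (simp add: field_simps)
  have A1split: "Im (A1 t) = Im (ip n (chi t) (mvmul n (Z t) (psi t))) + Im (ip n (chi t) (mvmul n (Z t) (D t)))" for t
    unfolding A1_def phiD mvmul_add[abs_def] ip_add_right by simp
  have R2: "((\<lambda>t. Im (ip n (chi t) (mvmul n (Z t) (D t)))) has_integral (Im I1 - L)) {0..T}"
  proof -
    have "((\<lambda>t. Im (A1 t) - Im (ip n (chi t) (mvmul n (Z t) (psi t)))) has_integral (Im I1 - L)) {0..T}"
      by (intro has_integral_diff has_integral_Im Lint) (use I1 in \<open>simp add: I1_def\<close>)
    then show ?thesis unfolding A1split by simp
  qed
  have costsplit: "Re (braket n (phi t) P (phi t)) = Re (braket n (psi t) P (psi t)) + 2 * Re (A2 t) + Re (ip n (D t) (mvmul n P (D t)))" for t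
  proof -
    have e1: "ip n (psi t) (mvmul n P (D t)) = A2 t"
      unfolding A2_def by (rule ip_adj[symmetric]) (use adjP in auto)
    have e2: "ip n (D t) (mvmul n P (psi t)) = cnj (A2 t)"
      unfolding A2_def ip_cnj ..
    show ?thesis
      unfolding braket_ip phiD mvmul_add[abs_def] ip_add_right ip_add_left e1 e2 by simp
  qed
  have R3: "((\<lambda>t. Re (ip n (D t) (mvmul n P (D t)))) has_integral (Jphi - Jpsi - 2 * Re I2)) {0..T}"
  proof -
    have "((\<lambda>t. Re (braket n (phi t) P (phi t)) - Re (braket n (psi t) P (psi t)) - 2 * Re (A2 t))
            has_integral (Jphi - Jpsi - 2 * Re I2)) {0..T}"
      by (intro has_integral_diff Jphi Jpsi has_integral_mult_right has_integral_Re I2)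
    then show ?thesis unfolding costsplit by simp
  qed
  have b2: "- (real n * X * (real n * CZ * (\<epsilon> * Kd))) \<le> Im (ip n (chi t) (mvmul n (Z t) (D t)))" if t: "t \<in> {0..T}" for t
  proof -
    have "cmod (ip n (chi t) (mvmul n (Z t) (D t))) \<le> real n * X * (real n * CZ * (\<epsilon> * Kd))"
      by (rule ip_mv_bound) (use t bchi bZ Db nn eps Kd0 in auto)
    then show ?thesis using abs_Im_le_cmod[of "ip n (chi t) (mvmul n (Z t) (D t))"] by linarith
  qed
  have b3: "- (real n * (\<epsilon> * Kd) * (real n * CP * (\<epsilon> * Kd))) \<le> Re (ip n (D t) (mvmul n P (D t)))" if t: "t \<in> {0..T}" for t
  proof -
    have "cmod (ip n (D t) (mvmul n P (D t))) \<le> real n * (\<epsilon> * Kd) * (real n * CP * (\<epsilon> * Kd))"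
      by (rule ip_mv_bound) (use t bP Db nn eps Kd0 in auto)
    then show ?thesis using abs_Re_le_cmod[of "ip n (D t) (mvmul n P (D t))"] by linarith
  qed
  have i2: "- (real n * X * (real n * CZ * (\<epsilon> * Kd))) * T \<le> Im I1 - L"
    using has_integral_le[OF has_integral_const_real R2 b2] T by (simp add: mult_ac)
  have i3: "- (real n * (\<epsilon> * Kd) * (real n * CP * (\<epsilon> * Kd))) * T \<le> Jphi - Jpsi - 2 * Re I2"
    using has_integral_le[OF has_integral_const_real R3 b3] T by (simp add: mult_ac)
  have "Jphi - Jpsi = (4 * \<epsilon> / kS) * L + (4 * \<epsilon> / kS) * (Im I1 - L) + (Jphi - Jpsi - 2 * Re I2)"
    using ReI2 kS by (simp add: field_simps)
  also have "\<dots> \<ge> (4 * \<epsilon> / kS) * L + (4 * \<epsilon> / kS) * (- (real n * X * (real n * CZ * (\<epsilon> * Kd))) * T)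
      + (- (real n * (\<epsilon> * Kd) * (real n * CP * (\<epsilon> * Kd))) * T)"
    using i2 i3 eps kS by (intro add_mono mult_left_mono order_refl) auto
  finally show ?thesis
    unfolding Qc_def Let_def Kd_def[symmetric] by (simp add: algebra_simps power2_eq_square)
qed


lemma set_bm_scaleR:
  fixes f :: "real \<Rightarrow> real" and g :: "real \<Rightarrow> 'b::euclidean_space"
  assumes "set_borel_measurable M A f" "set_borel_measurable M A g"
  shows "set_borel_measurable M A (\<lambda>x. f x *\<^sub>R g x)"
proof -
  have "(\<lambda>x. (indicator A x *\<^sub>R f x) *\<^sub>R (indicator A x *\<^sub>R g x)) \<in> borel_measurable M"
    using assms unfolding set_borel_measurable_def by (rule borel_measurable_scaleR)
  moreover have "(\<lambda>x. (indicator A x *\<^sub>R f x) *\<^sub>R (indicator A x *\<^sub>R g x)) = (\<lambda>x. indicator A x *\<^sub>R (f x *\<^sub>R g x))"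
    by (auto simp: indicator_def)
  ultimately show ?thesis unfolding set_borel_measurable_def by simp
qed

lemma set_bm_inner:
  fixes f g :: "real \<Rightarrow> 'b::euclidean_space"
  assumes "set_borel_measurable M A f" "set_borel_measurable M A g"
  shows "set_borel_measurable M A (\<lambda>x. f x \<bullet> g x)"
proof -
  have "(\<lambda>x. (indicator A x *\<^sub>R f x) \<bullet> (indicator A x *\<^sub>R g x)) \<in> borel_measurable M"
    using assms unfolding set_borel_measurable_def by (intro borel_measurable_inner)
  moreover have "(\<lambda>x. (indicator A x *\<^sub>R f x) \<bullet> (indicator A x *\<^sub>R g x)) = (\<lambda>x. indicator A x *\<^sub>R (f x \<bullet> g x))"
    by (auto simp: indicator_def)
  ultimately show ?thesis unfolding set_borel_measurable_def by simp
qed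

lemma set_bm_cont:
  fixes f :: "real \<Rightarrow> 'b::real_normed_vector"
  shows "continuous_on {a..b} f \<Longrightarrow> set_borel_measurable lborel {a..b} f"
  unfolding set_borel_measurable_def
  by (simp add: borel_measurable_continuous_on_indicator)

lemma bounded_set_integrable:
  fixes g :: "real \<Rightarrow> 'b::{banach, second_countable_topology}"
  assumes "set_borel_measurable lborel {a..b} g" "AE t in lborel. t \<in> {a..b} \<longrightarrow> norm (g t) \<le> C"
  shows "set_integrable lborel {a..b} g"
proof (rule set_integrable_bound[OF _ assms(1)])
  show "set_integrable lborel {a..b} (\<lambda>_. C)"
    unfolding set_integrable_def by (rule borel_integrable_compact) auto
  show "AE x in lborel. x \<in> {a..b} \<longrightarrow> norm (g x) \<le> norm C"
    using assms(2) by eventually_elim auto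
qed

lemma cont_bound:
  fixes f :: "real \<Rightarrow> 'b::real_normed_vector"
  assumes "continuous_on {a..b} f"
  obtains C where "0 \<le> C" "\<forall>t\<in>{a..b}. norm (f t) \<le> C"
proof -
  have "compact (f ` {a..b})" by (rule compact_continuous_image[OF assms]) simp
  then obtain C where "\<forall>x\<in>f ` {a..b}. norm x \<le> C" using compact_imp_bounded bounded_iff by metis
  then have "\<forall>t\<in>{a..b}. norm (f t) \<le> max C 0" by force
  then show ?thesis by (intro that) auto
qed

lemma ctrl_props:
  assumes "u \<in> Ctrl T m M"
  shows "set_borel_measurable lborel {0..T} u" "AE t in lborel. t \<in> {0..T} \<longrightarrow> u t \<in> cbox m M"
  using assms unfolding Ctrl_def by auto

lemma cbox_bound: obtains B where "0 \<le> B" "\<forall>x\<in>cbox m (M::real^3). norm x \<le> B"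
proof -
  obtain B where "\<forall>x\<in>cbox m M. norm x \<le> B" using bounded_cbox bounded_iff by metis
  then have "\<forall>x\<in>cbox m M. norm x \<le> max B 0" by force
  then show ?thesis by (intro that) auto
qed

lemma ctrl_bound:
  assumes "u \<in> Ctrl T m M" "\<forall>x\<in>cbox m M. norm x \<le> B"
  shows "AE t in lborel. t \<in> {0..T} \<longrightarrow> norm (u t) \<le> B"
  using ctrl_props(2)[OF assms(1)] by eventually_elim (use assms(2) in auto)

lemma ctrl_scaled_integrable:
  fixes u :: "real \<Rightarrow> real^3" and f :: "real \<Rightarrow> real"
  assumes u: "set_borel_measurable lborel {0..T} u" "AE t in lborel. t \<in> {0..T} \<longrightarrow> norm (u t) \<le> B"
    and f: "continuous_on {0..T} f"
  shows "set_integrable lborel {0..T} (\<lambda>t. f t *\<^sub>R u t)"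
proof -
  obtain Cf where Cf: "0 \<le> Cf" "\<forall>t\<in>{0..T}. norm (f t) \<le> Cf" using cont_bound[OF f] by blast
  show ?thesis
  proof (rule bounded_set_integrable[where C="Cf * B"])
    show "set_borel_measurable lborel {0..T} (\<lambda>t. f t *\<^sub>R u t)"
      by (intro set_bm_scaleR set_bm_cont f u)
    show "AE t in lborel. t \<in> {0..T} \<longrightarrow> norm (f t *\<^sub>R u t) \<le> Cf * B"
      using u(2)
    proof eventually_elim
      case (elim t)
      show ?case
      proof
        assume t: "t \<in> {0..T}"
        have "norm (f t *\<^sub>R u t) = norm (f t) * norm (u t)" by simp
        also have "\<dots> \<le> Cf * B" using t elim Cf by (intro mult_mono) auto
        finally show "norm (f t *\<^sub>R u t) \<le> Cf * B" .
      qed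
    qed
  qed
qed


definition adm :: "real \<Rightarrow> real \<Rightarrow> (real \<Rightarrow> real^3) \<Rightarrow> bool" where
  "adm T B u \<longleftrightarrow> set_borel_measurable lborel {0..T} u \<and> (AE t in lborel. t \<in> {0..T} \<longrightarrow> norm (u t) \<le> B)"

lemma Ctrl_adm: "u \<in> Ctrl T m M \<Longrightarrow> \<forall>x\<in>cbox m M. norm x \<le> B \<Longrightarrow> adm T B u"
  unfolding adm_def using ctrl_props ctrl_bound by blast

lemma adm_sub_integrable:
  assumes "adm T B u" "continuous_on {0..T} f" "t \<le> T"
  shows "set_integrable lborel {0..t} (\<lambda>\<tau>. f \<tau> *\<^sub>R u \<tau>)"
  by (rule set_integrable_subset[OF ctrl_scaled_integrable]) (use assms in \<open>auto simp: adm_def\<close>)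

lemma vfilt_HK:
  assumes "adm T B u" "t \<in> {0..T}"
  shows "vfilt gamma v0 u t = exp (- gamma * t) *\<^sub>R (v0 + integral {0..t} (\<lambda>\<tau>. (gamma * exp (gamma * \<tau>)) *\<^sub>R u \<tau>))"
proof -
  have "set_integrable lborel {0..t} (\<lambda>\<tau>. (gamma * exp (gamma * \<tau>)) *\<^sub>R u \<tau>)"
    by (rule adm_sub_integrable[OF assms(1)]) (use assms(2) in \<open>auto intro!: continuous_intros\<close>)
  from set_borel_integral_eq_integral(2)[OF this] show ?thesis unfolding vfilt_def by simp
qed

lemma vfilt_cont:
  assumes "adm T B u"
  shows "continuous_on {0..T} (vfilt gamma v0 u)"
proof -
  have "set_integrable lborel {0..T} (\<lambda>\<tau>. (gamma * exp (gamma * \<tau>)) *\<^sub>R u \<tau>)"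
    by (rule adm_sub_integrable[OF assms]) (auto intro!: continuous_intros)
  from set_borel_integral_eq_integral(1)[OF this]
  have int: "(\<lambda>\<tau>. (gamma * exp (gamma * \<tau>)) *\<^sub>R u \<tau>) integrable_on {0..T}" .
  have "continuous_on {0..T} (\<lambda>t. exp (- gamma * t) *\<^sub>R (v0 + integral {0..t} (\<lambda>\<tau>. (gamma * exp (gamma * \<tau>)) *\<^sub>R u \<tau>)))"
    by (intro continuous_intros indefinite_integral_continuous_1 int)
  then show ?thesis
    by (rule continuous_on_eq) (use vfilt_HK[OF assms] in auto)
qed

lemma vfilt_lin:
  assumes u: "adm T B u" and us: "adm T B us" and t: "t \<in> {0..T}"
  shows "vfilt gamma v0 (\<lambda>s. us s + \<epsilon> *\<^sub>R (u s - us s)) t = vfilt gamma v0 us t + \<epsilon> *\<^sub>R (vfilt gamma v0 u t - vfilt gamma v0 us t)"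
proof -
  define c where "c \<tau> = gamma * exp (gamma * \<tau>)" for \<tau>
  have cc: "continuous_on {0..T} c" unfolding c_def by (intro continuous_intros)
  have iu: "set_integrable lborel {0..t} (\<lambda>\<tau>. c \<tau> *\<^sub>R u \<tau>)"
    by (rule adm_sub_integrable[OF u cc]) (use t in auto)
  have ius: "set_integrable lborel {0..t} (\<lambda>\<tau>. c \<tau> *\<^sub>R us \<tau>)"
    by (rule adm_sub_integrable[OF us cc]) (use t in auto)
  have "(LINT \<tau>:{0..t}|lborel. c \<tau> *\<^sub>R (us \<tau> + \<epsilon> *\<^sub>R (u \<tau> - us \<tau>)))
      = (LINT \<tau>:{0..t}|lborel. c \<tau> *\<^sub>R us \<tau> + \<epsilon> *\<^sub>R (c \<tau> *\<^sub>R u \<tau> - c \<tau> *\<^sub>R us \<tau>))"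
    by (simp add: algebra_simps)
  also have "\<dots> = (LINT \<tau>:{0..t}|lborel. c \<tau> *\<^sub>R us \<tau>) + \<epsilon> *\<^sub>R ((LINT \<tau>:{0..t}|lborel. c \<tau> *\<^sub>R u \<tau>) - (LINT \<tau>:{0..t}|lborel. c \<tau> *\<^sub>R us \<tau>))"
    using iu ius by (simp add: set_integral_add set_integral_diff set_integral_scaleR_right)
  finally have eq: "(LINT \<tau>:{0..t}|lborel. (gamma * exp (gamma * \<tau>)) *\<^sub>R (us \<tau> + \<epsilon> *\<^sub>R (u \<tau> - us \<tau>)))
     = (LINT \<tau>:{0..t}|lborel. (gamma * exp (gamma * \<tau>)) *\<^sub>R us \<tau>) + \<epsilon> *\<^sub>R ((LINT \<tau>:{0..t}|lborel. (gamma * exp (gamma * \<tau>)) *\<^sub>R u \<tau>) - (LINT \<tau>:{0..t}|lborel. (gamma * exp (gamma * \<tau>)) *\<^sub>R us \<tau>))"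
    unfolding c_def .
  show ?thesis unfolding vfilt_def eq by (simp add: algebra_simps)
qed

lemma vfilt_diff:
  assumes u: "adm T B u" and us: "adm T B us" and t: "t \<in> {0..T}"
  shows "vfilt gamma v0 u t - vfilt gamma v0 us t
     = exp (- gamma * t) *\<^sub>R (LINT \<tau>:{0..t}|lborel. (gamma * exp (gamma * \<tau>)) *\<^sub>R (u \<tau> - us \<tau>))"
proof -
  define c where "c \<tau> = gamma * exp (gamma * \<tau>)" for \<tau>
  have cc: "continuous_on {0..T} c" unfolding c_def by (intro continuous_intros)
  have iu: "set_integrable lborel {0..t} (\<lambda>\<tau>. c \<tau> *\<^sub>R u \<tau>)"
    by (rule adm_sub_integrable[OF u cc]) (use t in auto)
  have ius: "set_integrable lborel {0..t} (\<lambda>\<tau>. c \<tau> *\<^sub>R us \<tau>)"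
    by (rule adm_sub_integrable[OF us cc]) (use t in auto)
  have "(LINT \<tau>:{0..t}|lborel. c \<tau> *\<^sub>R (u \<tau> - us \<tau>)) = (LINT \<tau>:{0..t}|lborel. c \<tau> *\<^sub>R u \<tau> - c \<tau> *\<^sub>R us \<tau>)"
    by (simp add: algebra_simps)
  also have "\<dots> = (LINT \<tau>:{0..t}|lborel. c \<tau> *\<^sub>R u \<tau>) - (LINT \<tau>:{0..t}|lborel. c \<tau> *\<^sub>R us \<tau>)"
    using iu ius by (simp add: set_integral_diff)
  finally have eq: "(LINT \<tau>:{0..t}|lborel. (gamma * exp (gamma * \<tau>)) *\<^sub>R (u \<tau> - us \<tau>))
     = (LINT \<tau>:{0..t}|lborel. (gamma * exp (gamma * \<tau>)) *\<^sub>R u \<tau>) - (LINT \<tau>:{0..t}|lborel. (gamma * exp (gamma * \<tau>)) *\<^sub>R us \<tau>)"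
    unfolding c_def .
  show ?thesis unfolding vfilt_def eq by (simp add: algebra_simps)
qed

lemma Ctrl_conv:
  assumes u: "u \<in> Ctrl T m M" and us: "us \<in> Ctrl T m M" and e: "0 \<le> \<epsilon>" "\<epsilon> \<le> 1"
  shows "(\<lambda>s. us s + \<epsilon> *\<^sub>R (u s - us s)) \<in> Ctrl T m M"
proof -
  obtain B where B: "0 \<le> B" "\<forall>x\<in>cbox m M. norm x \<le> B" using cbox_bound by blast
  let ?x = "\<lambda>s. us s + \<epsilon> *\<^sub>R (u s - us s)"
  have mu: "(\<lambda>s. indicator {0..T} s *\<^sub>R u s) \<in> borel_measurable lborel"
     "(\<lambda>s. indicator {0..T} s *\<^sub>R us s) \<in> borel_measurable lborel"
    using ctrl_props(1)[OF u] ctrl_props(1)[OF us] unfolding set_borel_measurable_def by auto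
  have "(\<lambda>s. indicator {0..T} s *\<^sub>R us s + \<epsilon> *\<^sub>R (indicator {0..T} s *\<^sub>R u s - indicator {0..T} s *\<^sub>R us s)) \<in> borel_measurable lborel"
    using mu by measurable
  moreover have "(\<lambda>s. indicator {0..T} s *\<^sub>R us s + \<epsilon> *\<^sub>R (indicator {0..T} s *\<^sub>R u s - indicator {0..T} s *\<^sub>R us s))
     = (\<lambda>s. indicator {0..T} s *\<^sub>R ?x s)"
    by (simp add: algebra_simps)
  ultimately have mx: "set_borel_measurable lborel {0..T} ?x" unfolding set_borel_measurable_def by simp
  have inbox: "AE t in lborel. t \<in> {0..T} \<longrightarrow> ?x t \<in> cbox m M"
    using ctrl_props(2)[OF u] ctrl_props(2)[OF us]
  proof eventually_elim
    case (elim t)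
    show ?case
    proof
      assume "t \<in> {0..T}"
      then have "u t \<in> cbox m M" "us t \<in> cbox m M" using elim by auto
      then have "(1 - \<epsilon>) *\<^sub>R us t + \<epsilon> *\<^sub>R u t \<in> cbox m M"
        using e by (intro convexD[OF convex_box(1)]) auto
      moreover have "(1 - \<epsilon>) *\<^sub>R us t + \<epsilon> *\<^sub>R u t = ?x t" by (simp add: algebra_simps)
      ultimately show "?x t \<in> cbox m M" by simp
    qed
  qed
  have sq: "set_integrable lborel {0..T} (\<lambda>t. (norm (?x t))\<^sup>2)"
  proof (rule bounded_set_integrable[where C="B^2"])
    have "(\<lambda>t. (norm (indicator {0..T} t *\<^sub>R ?x t))\<^sup>2) \<in> borel_measurable lborel"
      using mx unfolding set_borel_measurable_def by measurable
    moreover have "(\<lambda>t. (norm (indicator {0..T} t *\<^sub>R ?x t))\<^sup>2) = (\<lambda>t. indicator {0..T} t *\<^sub>R (norm (?x t))\<^sup>2)"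
      by (auto simp: indicator_def)
    ultimately show "set_borel_measurable lborel {0..T} (\<lambda>t. (norm (?x t))\<^sup>2)"
      unfolding set_borel_measurable_def by simp
    show "AE t in lborel. t \<in> {0..T} \<longrightarrow> norm ((norm (?x t))\<^sup>2) \<le> B\<^sup>2"
      using inbox
    proof eventually_elim
      case (elim t)
      then show ?case using B by (auto intro!: power_mono)
    qed
  qed
  show ?thesis unfolding Ctrl_def using mx sq inbox by blast
qed


lemma HZ_add: "HZ p muB g (v + \<epsilon> *\<^sub>R y) a b = HZ p muB g v a b + of_real \<epsilon> * HZ p muB g y a b"
  unfolding HZ_def by (simp add: sum.distrib ring_distribs sum_distrib_left mult_ac)

lemma Hfull_add: "Hfull p muB g A kS kT (v + \<epsilon> *\<^sub>R y) = (\<lambda>a b. Hfull p muB g A kS kT v a b + of_real \<epsilon> * HZ p muB g y a b)"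
  by (intro ext) (simp add: Hfull_def HZ_add)

lemma HZ_cont: "continuous_on S v \<Longrightarrow> continuous_on S (\<lambda>t. HZ p muB g (v t) a b)"
  unfolding HZ_def by (intro continuous_intros)

lemma Hfull_cont: "continuous_on S v \<Longrightarrow> continuous_on S (\<lambda>t. Hfull p muB g A kS kT (v t) a b)"
  unfolding Hfull_def by (intro continuous_intros HZ_cont)

lemma braket_sum: "braket n x (\<lambda>a b. \<Sum>i\<in>I. f i a b) z = (\<Sum>i\<in>I. braket n x (f i) z)"
proof -
  have "braket n x (\<lambda>a b. \<Sum>i\<in>I. f i a b) z = (\<Sum>k<n. \<Sum>l<n. \<Sum>i\<in>I. cnj (x k) * f i k l * z l)"
    unfolding braket_def by (simp add: sum_distrib_left sum_distrib_right)
  also have "\<dots> = (\<Sum>k<n. \<Sum>i\<in>I. \<Sum>l<n. cnj (x k) * f i k l * z l)"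
    by (intro sum.cong refl sum.swap)
  also have "\<dots> = (\<Sum>i\<in>I. \<Sum>k<n. \<Sum>l<n. cnj (x k) * f i k l * z l)"
    by (rule sum.swap)
  finally show ?thesis unfolding braket_def .
qed

lemma braket_scale: "braket n x (\<lambda>a b. c * M a b) z = c * braket n x M z"
  unfolding braket_def by (simp add: sum_distrib_left mult_ac)

lemma Im_HZ:
  "Im (ip n x (mvmul n (HZ p muB g y) z)) =
     muB * g * ((\<chi> i. Im (braket n x (\<lambda>a b. S1 p i a b + S2 p i a b) z)) \<bullet> y)"
proof -
  have "HZ p muB g y = (\<lambda>a b. of_real (muB * g) * (\<Sum>i\<in>UNIV. of_real (y $ i) * (S1 p i a b + S2 p i a b)))"
    unfolding HZ_def by (simp add: mult_ac)
  then have "braket n x (HZ p muB g y) z = of_real (muB * g) * (\<Sum>i\<in>UNIV. of_real (y $ i) * braket n x (\<lambda>a b. S1 p i a b + S2 p i a b) z)"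
    by (simp only: braket_scale braket_sum)
  then show ?thesis
    unfolding braket_ip[symmetric] by (simp add: inner_vec_def Im_sum mult_ac sum_distrib_left)
qed


lemma fubini_tri:
  fixes F w :: "real \<Rightarrow> real^3" and gamma T Bw :: real
  assumes g: "0 < gamma" and Fc: "continuous_on {0..T} F"
    and wm: "set_borel_measurable lborel {0..T} w" and wb: "AE t in lborel. t \<in> {0..T} \<longrightarrow> norm (w t) \<le> Bw"
  shows "set_integrable lborel {0..T} (\<lambda>t. (LINT \<tau>:{t..T}|lborel. (gamma * exp (gamma * (t - \<tau>))) *\<^sub>R F \<tau>) \<bullet> w t)"
    and "(LINT t:{0..T}|lborel. (LINT \<tau>:{t..T}|lborel. (gamma * exp (gamma * (t - \<tau>))) *\<^sub>R F \<tau>) \<bullet> w t)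
       = (LINT t:{0..T}|lborel. F t \<bullet> (exp (- gamma * t) *\<^sub>R (LINT \<tau>:{0..t}|lborel. (gamma * exp (gamma * \<tau>)) *\<^sub>R w \<tau>)))"
proof -
  define Fi where "Fi x = indicator {0..T} x *\<^sub>R F x" for x
  define wi where "wi x = indicator {0..T} x *\<^sub>R w x" for x
  have Fim[measurable]: "Fi \<in> borel_measurable lborel"
    using set_bm_cont[OF Fc] unfolding set_borel_measurable_def Fi_def .
  have wim[measurable]: "wi \<in> borel_measurable lborel"
    using wm unfolding set_borel_measurable_def wi_def .
  obtain CF where CF: "0 \<le> CF" "\<forall>t\<in>{0..T}. norm (F t) \<le> CF" using cont_bound[OF Fc] by blast
  define Bw' where "Bw' = max Bw 0"
  define f where "f t \<tau> = (if 0 \<le> t \<and> t \<le> \<tau> \<and> \<tau> \<le> T then 1 else 0) * (gamma * exp (gamma * (t - \<tau>))) * (Fi \<tau> \<bullet> wi t)" for t \<tau>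
  define bnd where "bnd x = indicator ({0..T} \<times> {0..T}) x * (gamma * CF * Bw')" for x :: "real \<times> real"
  have hm: "case_prod f \<in> borel_measurable (lborel \<Otimes>\<^sub>M lborel)"
    unfolding f_def case_prod_beta by measurable
  have bm: "bnd \<in> borel_measurable (lborel \<Otimes>\<^sub>M lborel)"
    unfolding bnd_def by measurable
  have bint: "integrable (lborel \<Otimes>\<^sub>M lborel) bnd"
  proof -
    have "integrable (lborel \<Otimes>\<^sub>M lborel) (indicator ({0..T} \<times> {0..T}) :: real \<times> real \<Rightarrow> real)"
    proof (subst integrable_indicator_iff, intro conjI)
      show "{0..T} \<times> {0..T} \<inter> space (lborel \<Otimes>\<^sub>M lborel) \<in> sets (lborel \<Otimes>\<^sub>M lborel)"
        by simp
      have "emeasure (lborel \<Otimes>\<^sub>M lborel) ({0..T} \<times> {0..T}) = emeasure lborel {0..T} * emeasure lborel {0..T}"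
        by (rule lborel.emeasure_pair_measure_Times) auto
      also have "\<dots> < \<infinity>" by (simp add: ennreal_mult_less_top emeasure_lborel_Icc_eq)
      finally show "emeasure (lborel \<Otimes>\<^sub>M lborel) ({0..T} \<times> {0..T} \<inter> space (lborel \<Otimes>\<^sub>M lborel)) < \<infinity>"
        by simp
    qed
    then show ?thesis unfolding bnd_def by (rule integrable_mult_left)
  qed
  have AEb: "AE x in lborel \<Otimes>\<^sub>M lborel. norm (case_prod f x) \<le> norm (bnd x)"
  proof (rule lborel_pair.AE_pair_measure)
    show "{x \<in> space (lborel \<Otimes>\<^sub>M lborel). norm (case_prod f x) \<le> norm (bnd x)} \<in> sets (lborel \<Otimes>\<^sub>M lborel)"
      using hm bm by measurable
    show "AE t in lborel. AE \<tau> in lborel. norm (case_prod f (t, \<tau>)) \<le> norm (bnd (t, \<tau>))"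
      using wb
    proof eventually_elim
      case (elim t)
      show ?case
      proof (rule AE_I2)
        fix \<tau>
        show "norm (case_prod f (t, \<tau>)) \<le> norm (bnd (t, \<tau>))"
        proof (cases "0 \<le> t \<and> t \<le> \<tau> \<and> \<tau> \<le> T")
          case True
          then have tT: "t \<in> {0..T}" "\<tau> \<in> {0..T}" by auto
          have e1: "exp (gamma * (t - \<tau>)) \<le> 1" using True g by (simp add: mult_nonneg_nonpos)
          have "norm (case_prod f (t, \<tau>)) = gamma * exp (gamma * (t - \<tau>)) * \<bar>F \<tau> \<bullet> w t\<bar>"
            unfolding f_def Fi_def wi_def using True g tT by (simp add: abs_mult)
          also have "\<dots> \<le> gamma * 1 * (CF * Bw')"
          proof (intro mult_mono order_refl)
            show "\<bar>F \<tau> \<bullet> w t\<bar> \<le> CF * Bw'"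
            proof -
              have "\<bar>F \<tau> \<bullet> w t\<bar> \<le> norm (F \<tau>) * norm (w t)" by (rule Cauchy_Schwarz_ineq2)
              also have "\<dots> \<le> CF * Bw'" using CF tT elim unfolding Bw'_def
                by (intro mult_mono) auto
              finally show ?thesis .
            qed
          qed (use g e1 in auto)
          also have "\<dots> = norm (bnd (t, \<tau>))" unfolding bnd_def Bw'_def using tT g CF by (simp add: abs_mult)
          finally show ?thesis .
        next
          case False
          then show ?thesis unfolding f_def by auto
        qed
      qed
    qed
  qed
  have fint: "integrable (lborel \<Otimes>\<^sub>M lborel) (case_prod f)"
    by (rule Bochner_Integration.integrable_bound[OF bint hm AEb])
  define G where "G t = (LINT \<tau>:{t..T}|lborel. (gamma * exp (gamma * (t - \<tau>))) *\<^sub>R F \<tau>)" for t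
  have in1: "integral\<^sup>L lborel (f t) = indicator {0..T} t *\<^sub>R (G t \<bullet> w t)" for t
  proof (cases "t \<in> {0..T}")
    case True
    define hh where "hh \<tau> = indicator {t..T} \<tau> *\<^sub>R ((gamma * exp (gamma * (t - \<tau>))) *\<^sub>R F \<tau>)" for \<tau>
    have feq: "f t = (\<lambda>\<tau>. hh \<tau> \<bullet> w t)"
      unfolding f_def Fi_def wi_def hh_def using True by (auto simp: indicator_def fun_eq_iff)
    have hint: "integrable lborel hh"
      unfolding hh_def
      by (rule borel_integrable_compact) (use True in \<open>auto intro!: continuous_intros continuous_on_subset[OF Fc]\<close>)
    have "integral\<^sup>L lborel (f t) = (\<integral>\<tau>. hh \<tau> \<bullet> w t \<partial>lborel)" by (simp only: feq)
    also have "\<dots> = integral\<^sup>L lborel hh \<bullet> w t" by (rule integral_inner_left) (use hint in simp)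
    also have "\<dots> = G t \<bullet> w t" unfolding G_def set_lebesgue_integral_def hh_def ..
    finally show ?thesis using True by simp
  next
    case False
    then have "f t = (\<lambda>_. 0)" unfolding f_def by (auto simp: fun_eq_iff)
    then show ?thesis using False by simp
  qed
  have in2: "(\<integral>t. f t \<tau> \<partial>lborel) = indicator {0..T} \<tau> *\<^sub>R (F \<tau> \<bullet> (exp (- gamma * \<tau>) *\<^sub>R (LINT s:{0..\<tau>}|lborel. (gamma * exp (gamma * s)) *\<^sub>R w s)))" for \<tau>
  proof (cases "\<tau> \<in> {0..T}")
    case True
    define kk where "kk t = indicator {0..\<tau>} t *\<^sub>R ((exp (- gamma * \<tau>) * (gamma * exp (gamma * t))) *\<^sub>R w t)" for t
    have feq: "(\<lambda>t. f t \<tau>) = (\<lambda>t. F \<tau> \<bullet> kk t)"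
    proof
      fix t
      have "exp (gamma * (t - \<tau>)) = exp (- gamma * \<tau>) * exp (gamma * t)"
        by (simp add: exp_add[symmetric] algebra_simps)
      then show "f t \<tau> = F \<tau> \<bullet> kk t"
        unfolding f_def Fi_def wi_def kk_def using True by (auto simp: indicator_def)
    qed
    have "set_integrable lborel {0..\<tau>} (\<lambda>t. (exp (- gamma * \<tau>) * (gamma * exp (gamma * t))) *\<^sub>R w t)"
      by (rule adm_sub_integrable[where T=T and B=Bw]) (use True wm wb in \<open>auto simp: adm_def intro!: continuous_intros\<close>)
    then have kint: "integrable lborel kk" unfolding kk_def set_integrable_def .
    have "(\<integral>t. f t \<tau> \<partial>lborel) = (\<integral>t. F \<tau> \<bullet> kk t \<partial>lborel)" by (simp only: feq)
    also have "\<dots> = F \<tau> \<bullet> integral\<^sup>L lborel kk" by (rule integral_inner_right) (use kint in simp)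
    also have "integral\<^sup>L lborel kk = (LINT s:{0..\<tau>}|lborel. (exp (- gamma * \<tau>) * (gamma * exp (gamma * s))) *\<^sub>R w s)"
      unfolding kk_def set_lebesgue_integral_def ..
    also have "\<dots> = exp (- gamma * \<tau>) *\<^sub>R (LINT s:{0..\<tau>}|lborel. (gamma * exp (gamma * s)) *\<^sub>R w s)"
      by (simp only: scaleR_scaleR[symmetric] set_integral_scaleR_right)
    finally show ?thesis using True by simp
  next
    case False
    then have "(\<lambda>t. f t \<tau>) = (\<lambda>_. 0)" unfolding f_def by (auto simp: fun_eq_iff)
    then show ?thesis using False by simp
  qed
  have "integrable lborel (\<lambda>t. integral\<^sup>L lborel (f t))"
    by (rule lborel_pair.integrable_fst[OF fint])
  then show "set_integrable lborel {0..T} (\<lambda>t. G t \<bullet> w t)" unfolding in1 set_integrable_def .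
  have "(\<integral>\<tau>. (\<integral>t. f t \<tau> \<partial>lborel) \<partial>lborel) = (\<integral>t. (\<integral>\<tau>. f t \<tau> \<partial>lborel) \<partial>lborel)"
    by (rule lborel_pair.Fubini_integral[OF fint])
  then show "(LINT t:{0..T}|lborel. G t \<bullet> w t)
       = (LINT t:{0..T}|lborel. F t \<bullet> (exp (- gamma * t) *\<^sub>R (LINT \<tau>:{0..t}|lborel. (gamma * exp (gamma * \<tau>)) *\<^sub>R w \<tau>)))"
    unfolding set_lebesgue_integral_def[of _ "{0..T}"] in1 in2 by simp
qed


lemma fin_bound2:
  fixes M :: "real \<Rightarrow> nat \<Rightarrow> nat \<Rightarrow> complex"
  assumes "\<forall>a<n1. \<forall>b<n2. continuous_on {0..T} (\<lambda>t. M t a b)"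
  obtains C where "0 \<le> C" "\<forall>t\<in>{0..T}. \<forall>a<n1. \<forall>b<n2. cmod (M t a b) \<le> C"
proof -
  define P where "P a b C \<longleftrightarrow> 0 \<le> C \<and> (\<forall>t\<in>{0..T}. cmod (M t a b) \<le> C)" for a b C
  define Cab where "Cab a b = (SOME C. P a b C)" for a b
  have PC: "P a b (Cab a b)" if "a < n1" "b < n2" for a b
  proof -
    have c: "continuous_on {0..T} (\<lambda>t. M t a b)" using assms that by blast
    obtain C where "0 \<le> C" "\<forall>t\<in>{0..T}. norm (M t a b) \<le> C"
      using cont_bound[OF c] by blast
    then have "\<exists>C. P a b C" unfolding P_def by blast
    then show ?thesis unfolding Cab_def by (rule someI_ex)
  qed
  define C where "C = (\<Sum>a<n1. \<Sum>b<n2. Cab a b)"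
  show ?thesis
  proof (rule that)
    show "0 \<le> C" unfolding C_def using PC unfolding P_def by (auto intro!: sum_nonneg)
    show "\<forall>t\<in>{0..T}. \<forall>a<n1. \<forall>b<n2. cmod (M t a b) \<le> C"
    proof (intro ballI allI impI)
      fix t a b assume t: "t \<in> {0..T}" and a: "a < n1" and b: "b < n2"
      have "cmod (M t a b) \<le> Cab a b" using PC[OF a b] t unfolding P_def by auto
      also have "\<dots> \<le> (\<Sum>b'<n2. Cab a b')"
        by (rule member_le_sum) (use PC a b in \<open>auto simp: P_def\<close>)
      also have "\<dots> \<le> C" unfolding C_def
        by (rule member_le_sum[where f="\<lambda>a. \<Sum>b<n2. Cab a b"]) (use PC a in \<open>auto simp: P_def intro!: sum_nonneg\<close>)
      finally show "cmod (M t a b) \<le> C" .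
    qed
  qed
qed

lemma cont_has_integral:
  fixes f :: "real \<Rightarrow> real"
  assumes "continuous_on {a..b} f"
  shows "(f has_integral (LINT t:{a..b}|lborel. f t)) {a..b}"
proof -
  have si: "set_integrable lborel {a..b} f"
    unfolding set_integrable_def by (rule borel_integrable_compact) (use assms in auto)
  show ?thesis
    using set_borel_integral_eq_integral[OF si] by (simp add: integrable_integral)
qed

lemma eps_limit:
  fixes A B :: real
  assumes "\<And>\<epsilon>. 0 < \<epsilon> \<Longrightarrow> \<epsilon> \<le> 1 \<Longrightarrow> A \<le> \<epsilon> * B"
  shows "A \<le> 0"
proof (rule ccontr)
  assume "\<not> A \<le> 0"
  then have A: "0 < A" by simp
  define e where "e = min 1 (A / (\<bar>B\<bar> + 1))"
  have e0: "0 < e" unfolding e_def using A by simp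
  have e1: "e \<le> 1" unfolding e_def by simp
  have "A \<le> e * B" using assms[OF e0 e1] .
  also have "\<dots> \<le> e * \<bar>B\<bar>" using e0 by (intro mult_left_mono) auto
  also have "\<dots> \<le> (A / (\<bar>B\<bar> + 1)) * \<bar>B\<bar>" unfolding e_def by (intro mult_right_mono) auto
  also have "\<dots> < A"
  proof -
    have "(A / (\<bar>B\<bar> + 1)) * \<bar>B\<bar> = A * (\<bar>B\<bar> / (\<bar>B\<bar> + 1))" by simp
    also have "\<dots> < A * 1" using A by (intro mult_strict_left_mono) auto
    finally show ?thesis by simp
  qed
  finally show False by simp
qed

lemma set_integral_sum':
  fixes f :: "nat \<Rightarrow> real \<Rightarrow> real"
  assumes "\<And>l. l \<in> L \<Longrightarrow> set_integrable lborel S (f l)"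
  shows "set_integrable lborel S (\<lambda>t. \<Sum>l\<in>L. f l t)"
    "(LINT t:S|lborel. (\<Sum>l\<in>L. f l t)) = (\<Sum>l\<in>L. LINT t:S|lborel. f l t)"
proof -
  have i: "\<And>l. l \<in> L \<Longrightarrow> integrable lborel (\<lambda>x. indicator S x * f l x)"
    using assms unfolding set_integrable_def by simp
  have e: "(\<lambda>x. indicator S x * (\<Sum>l\<in>L. f l x)) = (\<lambda>x. \<Sum>l\<in>L. indicator S x * f l x)"
    by (simp add: sum_distrib_left)
  show "set_integrable lborel S (\<lambda>t. \<Sum>l\<in>L. f l t)"
    unfolding set_integrable_def using i by (simp add: e)
  show "(LINT t:S|lborel. (\<Sum>l\<in>L. f l t)) = (\<Sum>l\<in>L. LINT t:S|lborel. f l t)"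
    unfolding set_lebesgue_integral_def using i by (simp add: e integral_sum)
qed


definition Fv :: "nat \<Rightarrow> (real \<Rightarrow> cvec) \<Rightarrow> (real \<Rightarrow> cvec) \<Rightarrow> real \<Rightarrow> real^3" where
  "Fv p psi chi t = (\<chi> i. Im (braket (ndim p) (chi t) (\<lambda>a b. S1 p i a b + S2 p i a b) (psi t)))"

lemma braket_cont:
  assumes "\<And>k. k < n \<Longrightarrow> continuous_on S (\<lambda>t. x t k)" "\<And>k. k < n \<Longrightarrow> continuous_on S (\<lambda>t. y t k)"
  shows "continuous_on S (\<lambda>t. braket n (x t) M (y t))"
  unfolding braket_def using assms by (auto intro!: continuous_intros)

lemma Fv_cont:
  assumes "\<And>k. k < ndim p \<Longrightarrow> continuous_on S (\<lambda>t. psi t k)" "\<And>k. k < ndim p \<Longrightarrow> continuous_on S (\<lambda>t. chi t k)"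
  shows "continuous_on S (Fv p psi chi)"
  unfolding Fv_def by (intro continuous_on_vec_lambda continuous_intros braket_cont assms)

lemma HP_form:
  "HP p T muB g gamma psi w chi t =
     (muB * g / (3 * 2 powr (real p - 1))) *
       (\<Sum>l < 3 * 2 ^ p. (LINT \<tau>:{t..T}|lborel. (gamma * exp (gamma * (t - \<tau>))) *\<^sub>R Fv p (psi l) (chi l) \<tau>) \<bullet> w)"
  unfolding HP_def Fv_def by (simp add: inner_sum_left)

lemma adm_diff:
  assumes "adm T B u" "adm T B us"
  shows "adm T (2 * B) (\<lambda>t. u t - us t)"
proof -
  have "(\<lambda>x. indicator {0..T} x *\<^sub>R u x - indicator {0..T} x *\<^sub>R us x) \<in> borel_measurable lborel"
    using assms unfolding adm_def set_borel_measurable_def by (intro borel_measurable_diff) auto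
  then have m: "set_borel_measurable lborel {0..T} (\<lambda>t. u t - us t)"
    unfolding set_borel_measurable_def by (simp add: scaleR_diff_right)
  have "AE t in lborel. t \<in> {0..T} \<longrightarrow> norm (u t - us t) \<le> 2 * B"
    using assms unfolding adm_def
  proof (elim conjE)
    assume "AE t in lborel. t \<in> {0..T} \<longrightarrow> norm (u t) \<le> B" "AE t in lborel. t \<in> {0..T} \<longrightarrow> norm (us t) \<le> B"
    then show ?thesis
    proof eventually_elim
      case (elim t)
      then show ?case by (smt (verit) norm_triangle_ineq4)
    qed
  qed
  then show ?thesis using m unfolding adm_def by blast
qed

lemma HP_diff:
  assumes g: "0 < gamma" and u: "u \<in> Ctrl T m M" and us: "us \<in> Ctrl T m M"
    and Fc: "\<forall>l < 3 * 2 ^ p. continuous_on {0..T} (Fv p (psi l) (chi l))"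
  shows "set_lebesgue_integral lborel {0..T} (\<lambda>t. HP p T muB g gamma psi (u t) chi t)
       - set_lebesgue_integral lborel {0..T} (\<lambda>t. HP p T muB g gamma psi (us t) chi t)
     = (muB * g / (3 * 2 powr (real p - 1))) *
         (\<Sum>l < 3 * 2 ^ p. LINT t:{0..T}|lborel. Fv p (psi l) (chi l) t \<bullet> (vfilt gamma v0 u t - vfilt gamma v0 us t))"
proof -
  obtain B where B: "0 \<le> B" "\<forall>x\<in>cbox m M. norm x \<le> B" using cbox_bound by blast
  have au: "adm T B u" and aus: "adm T B us" using Ctrl_adm[OF u B(2)] Ctrl_adm[OF us B(2)] by auto
  have aw: "adm T (2 * B) (\<lambda>t. u t - us t)" by (rule adm_diff[OF au aus])
  define c where "c = muB * g / (3 * 2 powr (real p - 1))"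
  define G where "G l t = (LINT \<tau>:{t..T}|lborel. (gamma * exp (gamma * (t - \<tau>))) *\<^sub>R Fv p (psi l) (chi l) \<tau>)" for l t
  have si: "set_integrable lborel {0..T} (\<lambda>t. G l t \<bullet> x t)" if "(l::nat) < 3 * 2 ^ p" "adm T B' x" for l x B'
    unfolding G_def using fubini_tri(1)[OF g, of T "Fv p (psi l) (chi l)" x B'] Fc that unfolding adm_def by blast
  have HPx: "set_lebesgue_integral lborel {0..T} (\<lambda>t. HP p T muB g gamma psi (x t) chi t)
      = c * (\<Sum>l < 3 * 2 ^ p. LINT t:{0..T}|lborel. G l t \<bullet> x t)" if "adm T B x" for x
  proof -
    have "set_lebesgue_integral lborel {0..T} (\<lambda>t. HP p T muB g gamma psi (x t) chi t)
       = (LINT t:{0..T}|lborel. c * (\<Sum>l < 3 * 2 ^ p. G l t \<bullet> x t))"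
      unfolding HP_form c_def G_def ..
    also have "\<dots> = c * (LINT t:{0..T}|lborel. (\<Sum>l < 3 * 2 ^ p. G l t \<bullet> x t))"
      by (rule set_integral_mult_right)
    also have "(LINT t:{0..T}|lborel. (\<Sum>l < 3 * 2 ^ p. G l t \<bullet> x t)) = (\<Sum>l < 3 * 2 ^ p. LINT t:{0..T}|lborel. G l t \<bullet> x t)"
      by (rule set_integral_sum'(2)) (use si that in auto)
    finally show ?thesis .
  qed
  have "set_lebesgue_integral lborel {0..T} (\<lambda>t. HP p T muB g gamma psi (u t) chi t)
       - set_lebesgue_integral lborel {0..T} (\<lambda>t. HP p T muB g gamma psi (us t) chi t)
     = c * (\<Sum>l < 3 * 2 ^ p. (LINT t:{0..T}|lborel. G l t \<bullet> u t) - (LINT t:{0..T}|lborel. G l t \<bullet> us t))"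
    unfolding HPx[OF au] HPx[OF aus] by (simp add: sum_subtractf right_diff_distrib)
  also have "\<dots> = c * (\<Sum>l < 3 * 2 ^ p. LINT t:{0..T}|lborel. G l t \<bullet> (u t - us t))"
  proof (intro arg_cong[where f="\<lambda>x. c * x"] sum.cong refl)
    fix l :: nat assume l: "l \<in> {..< 3 * 2 ^ p}"
    have "(LINT t:{0..T}|lborel. G l t \<bullet> (u t - us t)) = (LINT t:{0..T}|lborel. G l t \<bullet> u t - G l t \<bullet> us t)"
      by (simp add: inner_diff_right)
    also have "\<dots> = (LINT t:{0..T}|lborel. G l t \<bullet> u t) - (LINT t:{0..T}|lborel. G l t \<bullet> us t)"
      by (rule set_integral_diff(2)) (use si l au aus in auto)
    finally show "(LINT t:{0..T}|lborel. G l t \<bullet> u t) - (LINT t:{0..T}|lborel. G l t \<bullet> us t)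
        = (LINT t:{0..T}|lborel. G l t \<bullet> (u t - us t))" by simp
  qed
  also have "\<dots> = c * (\<Sum>l < 3 * 2 ^ p. LINT t:{0..T}|lborel. Fv p (psi l) (chi l) t \<bullet> (vfilt gamma v0 u t - vfilt gamma v0 us t))"
  proof (intro arg_cong[where f="\<lambda>x. c * x"] sum.cong refl)
    fix l :: nat assume l: "l \<in> {..< 3 * 2 ^ p}"
    have "(LINT t:{0..T}|lborel. G l t \<bullet> (u t - us t))
        = (LINT t:{0..T}|lborel. Fv p (psi l) (chi l) t \<bullet> (exp (- gamma * t) *\<^sub>R (LINT \<tau>:{0..t}|lborel. (gamma * exp (gamma * \<tau>)) *\<^sub>R (u \<tau> - us \<tau>))))"
      unfolding G_def by (rule fubini_tri(2)[OF g]) (use Fc l aw in \<open>auto simp: adm_def\<close>)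
    also have "\<dots> = (LINT t:{0..T}|lborel. Fv p (psi l) (chi l) t \<bullet> (vfilt gamma v0 u t - vfilt gamma v0 us t))"
      by (rule set_lebesgue_integral_cong) (use vfilt_diff[OF au aus] in auto)
    finally show "(LINT t:{0..T}|lborel. G l t \<bullet> (u t - us t))
        = (LINT t:{0..T}|lborel. Fv p (psi l) (chi l) t \<bullet> (vfilt gamma v0 u t - vfilt gamma v0 us t))" .
  qed
  finally show ?thesis unfolding c_def .
qed


lemma main_ineq:
  fixes p :: nat
    and T hbar muB g kS kT gamma :: real
    and v0 m M :: "real^3"
    and A :: "nat \<Rightarrow> real^3"
    and psi chi :: "(real \<Rightarrow> real^3) \<Rightarrow> nat \<Rightarrow> real \<Rightarrow> cvec"
    and ustar u :: "real \<Rightarrow> real^3"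
  assumes T: "T > 0" and hb: "hbar > 0" and kS: "kS > 0" and g: "gamma > 0"
    and psi_sol: "\<forall>u \<in> Ctrl T m M. \<forall>l < 3 * 2 ^ p.
          is_psi_sol p T hbar muB g A kS kT (vfilt gamma v0 u) (psiT p l) (psi u l)"
    and chi_sol: "\<forall>u \<in> Ctrl T m M. \<forall>l < 3 * 2 ^ p.
          is_chi_sol p T hbar muB g A kS kT (vfilt gamma v0 u) (psi u l) (chi u l)"
    and us: "ustar \<in> Ctrl T m M"
    and ustar_opt: "\<forall>u \<in> Ctrl T m M. Jcost p T kS (psi u) \<le> Jcost p T kS (psi ustar)"
    and u: "u \<in> Ctrl T m M"
  shows "muB * g * (\<Sum>l < 3 * 2 ^ p. LINT t:{0..T}|lborel.
            Fv p (psi ustar l) (chi ustar l) t \<bullet> (vfilt gamma v0 u t - vfilt gamma v0 ustar t)) \<le> 0"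
proof -
  define n where "n = ndim p"
  define NL where "NL = (3 * 2 ^ p :: nat)"
  obtain Bc where Bc: "0 \<le> Bc" "\<forall>x\<in>cbox m M. norm x \<le> Bc" using cbox_bound by blast
  have au: "adm T Bc u" and aus: "adm T Bc ustar" using Ctrl_adm[OF u Bc(2)] Ctrl_adm[OF us Bc(2)] by auto
  define vs where "vs = vfilt gamma v0 ustar"
  define dv where "dv t = vfilt gamma v0 u t - vs t" for t
  have vsc: "continuous_on {0..T} vs" unfolding vs_def by (rule vfilt_cont[OF aus])
  have dvc: "continuous_on {0..T} dv" unfolding dv_def vs_def
    by (intro continuous_on_diff vfilt_cont[OF au] vfilt_cont[OF aus])
  have psis: "is_psi_sol p T hbar muB g A kS kT vs (psiT p l) (psi ustar l)" if "l < NL" for l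
    using psi_sol us that unfolding vs_def NL_def by blast
  have chis: "is_chi_sol p T hbar muB g A kS kT vs (psi ustar l) (chi ustar l)" if "l < NL" for l
    using chi_sol us that unfolding vs_def NL_def by blast
  have psicont: "continuous_on {0..T} (\<lambda>t. psi x l t k)"
    if "is_psi_sol p T hbar muB g A kS kT v (psiT p l) (psi x l)" "k < n" for x l k v
    by (rule continuous_on_vector_derivative) (use that in \<open>auto simp: is_psi_sol_def n_def\<close>)
  have chicont: "continuous_on {0..T} (\<lambda>t. chi ustar l t k)" if "l < NL" "k < n" for l k
    using chis[OF that(1)] that(2) unfolding is_chi_sol_def n_def by blast
  obtain CH where CH: "0 \<le> CH" "\<forall>t\<in>{0..T}. \<forall>a<n. \<forall>b<n. cmod (Hfull p muB g A kS kT (vs t) a b) \<le> CH"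
    using fin_bound2[of n n T "\<lambda>t a b. Hfull p muB g A kS kT (vs t) a b"] Hfull_cont[OF vsc] by blast
  obtain CZ where CZ: "0 \<le> CZ" "\<forall>t\<in>{0..T}. \<forall>a<n. \<forall>b<n. cmod (HZ p muB g (dv t) a b) \<le> CZ"
    using fin_bound2[of n n T "\<lambda>t a b. HZ p muB g (dv t) a b"] HZ_cont[OF dvc] by blast
  obtain CP where CP: "0 \<le> CP" "\<forall>t\<in>{0..T}. \<forall>a<n. \<forall>b<n. cmod (PS p a b) \<le> CP"
    using fin_bound2[of n n T "\<lambda>t a b. PS p a b"] by auto
  obtain Psi where Psi: "0 \<le> Psi" "\<forall>t\<in>{0..T}. \<forall>l<NL. \<forall>k<n. cmod (psi ustar l t k) \<le> Psi"
    using fin_bound2[of NL n T "\<lambda>t l k. psi ustar l t k"] psicont psis by blast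
  obtain X where X: "0 \<le> X" "\<forall>t\<in>{0..T}. \<forall>l<NL. \<forall>k<n. cmod (chi ustar l t k) \<le> X"
    using fin_bound2[of NL n T "\<lambda>t l k. chi ustar l t k"] chicont by blast
  have CP': "\<forall>a<n. \<forall>b<n. cmod (PS p a b) \<le> CP" using CP T by auto
  define Q where "Q = Qc n T hbar kS CH CZ CP Psi X"
  define Lv where "Lv l = (LINT t:{0..T}|lborel. Fv p (psi ustar l) (chi ustar l) t \<bullet> dv t)" for l
  define Jl where "Jl x l = (LINT t:{0..T}|lborel. Re (braket n (psi x l t) (PS p) (psi x l t)))" for x l
  have Jcost_eq: "Jcost p T kS (psi x) = kS / (3 * 2 ^ (p + 1)) * (\<Sum>l<NL. Jl x l)" for x
    unfolding Jcost_def Jl_def NL_def n_def ..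
  have Fvc: "continuous_on {0..T} (Fv p (psi ustar l) (chi ustar l))" if "l < NL" for l
    by (rule Fv_cont) (use psicont[OF psis[OF that]] chicont[OF that] in \<open>auto simp: n_def\<close>)
  have key: "(4 / kS) * (muB * g * (\<Sum>l<NL. Lv l)) \<le> \<epsilon> * (real NL * Q)" if e: "0 < \<epsilon>" "\<epsilon> \<le> 1" for \<epsilon>
  proof -
    define ue where "ue s = ustar s + \<epsilon> *\<^sub>R (u s - ustar s)" for s
    have ueC: "ue \<in> Ctrl T m M" unfolding ue_def by (rule Ctrl_conv[OF u us]) (use e in auto)
    have vue: "vfilt gamma v0 ue t = vs t + \<epsilon> *\<^sub>R dv t" if "t \<in> {0..T}" for t
      unfolding ue_def dv_def vs_def by (rule vfilt_lin[OF au aus that])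
    have percore: "\<epsilon> * (4 / kS) * (muB * g * Lv l) - \<epsilon>^2 * Q \<le> Jl ue l - Jl ustar l" if l: "l < NL" for l
    proof -
      have pe: "is_psi_sol p T hbar muB g A kS kT (vfilt gamma v0 ue) (psiT p l) (psi ue l)"
        using psi_sol ueC l unfolding NL_def by blast
      have dphi: "\<forall>t\<in>{0..T}. \<forall>k<n. ((\<lambda>s. psi ue l s k) has_vector_derivative
          mvmul n (\<lambda>a b. Hfull p muB g A kS kT (vs t) a b + of_real \<epsilon> * HZ p muB g (dv t) a b) (psi ue l t) k / (\<i> * of_real hbar)) (at t within {0..T})"
      proof (intro ballI allI impI)
        fix t k assume t: "t \<in> {0..T}" and k: "k < n"
        have "Hfull p muB g A kS kT (vfilt gamma v0 ue t) = (\<lambda>a b. Hfull p muB g A kS kT (vs t) a b + of_real \<epsilon> * HZ p muB g (dv t) a b)"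
          unfolding vue[OF t] by (rule Hfull_add)
        with pe t k show "((\<lambda>s. psi ue l s k) has_vector_derivative
          mvmul n (\<lambda>a b. Hfull p muB g A kS kT (vs t) a b + of_real \<epsilon> * HZ p muB g (dv t) a b) (psi ue l t) k / (\<i> * of_real hbar)) (at t within {0..T})"
          unfolding is_psi_sol_def n_def by metis
      qed
      have dpsi: "\<forall>t\<in>{0..T}. \<forall>k<n. ((\<lambda>s. psi ustar l s k) has_vector_derivative
          mvmul n (Hfull p muB g A kS kT (vs t)) (psi ustar l t) k / (\<i> * of_real hbar)) (at t within {0..T})"
        using psis[OF l] unfolding is_psi_sol_def n_def by blast
      have init: "\<forall>k<n. psi ue l 0 k = psi ustar l 0 k"
        using pe psis[OF l] unfolding is_psi_sol_def n_def by auto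
      have cs: "is_chi_sol p T hbar muB g A kS kT vs (psi ustar l) (chi ustar l)" by (rule chis[OF l])
      have chiT: "\<forall>k<n. chi ustar l T k = 0" using cs unfolding is_chi_sol_def n_def by blast
      have chic: "\<forall>k<n. continuous_on {0..T} (\<lambda>s. chi ustar l s k)" using cs unfolding is_chi_sol_def n_def by blast
      have dchi: "\<forall>t\<in>{0..<T}. \<forall>k<n. ((\<lambda>s. chi ustar l s k) has_vector_derivative
        (mvmul n (Hstar p muB g A kS kT (vs t)) (chi ustar l t) k - \<i> * of_real (kS / 2) * mvmul n (PS p) (psi ustar l t) k) / (\<i> * of_real hbar))
        (at t within {0..T})" using cs unfolding is_chi_sol_def n_def by blast
      have adjH: "\<forall>t\<in>{0..T}. \<forall>a<n. \<forall>b<n. cnj (Hstar p muB g A kS kT (vs t) b a) = Hfull p muB g A kS kT (vs t) a b"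
        unfolding n_def using Hstar_adj by blast
      have adjP: "\<forall>a<n. \<forall>b<n. cnj (PS p b a) = PS p a b" using herm_PS unfolding herm_def by blast
      have bpsi: "\<forall>t\<in>{0..T}. \<forall>k<n. cmod (psi ustar l t k) \<le> Psi" using Psi l by blast
      have bchi: "\<forall>t\<in>{0..T}. \<forall>k<n. cmod (chi ustar l t k) \<le> X" using X l by blast
      have Jphi: "((\<lambda>t. Re (braket n (psi ue l t) (PS p) (psi ue l t))) has_integral Jl ue l) {0..T}"
        unfolding Jl_def
        by (intro cont_has_integral continuous_intros braket_cont) (use psicont[OF pe] in auto)
      have Jpsi: "((\<lambda>t. Re (braket n (psi ustar l t) (PS p) (psi ustar l t))) has_integral Jl ustar l) {0..T}"
        unfolding Jl_def
        by (intro cont_has_integral continuous_intros braket_cont) (use psicont[OF psis[OF l]] in auto)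
      have Lint: "((\<lambda>t. Im (ip n (chi ustar l t) (mvmul n (HZ p muB g (dv t)) (psi ustar l t)))) has_integral (muB * g * Lv l)) {0..T}"
      proof -
        have "((\<lambda>t. muB * g * (Fv p (psi ustar l) (chi ustar l) t \<bullet> dv t)) has_integral
               (LINT t:{0..T}|lborel. muB * g * (Fv p (psi ustar l) (chi ustar l) t \<bullet> dv t))) {0..T}"
          by (intro cont_has_integral continuous_intros Fvc l dvc)
        moreover have "(LINT t:{0..T}|lborel. muB * g * (Fv p (psi ustar l) (chi ustar l) t \<bullet> dv t)) = muB * g * Lv l"
          unfolding Lv_def by (rule set_integral_mult_right)
        moreover have "(\<lambda>t. muB * g * (Fv p (psi ustar l) (chi ustar l) t \<bullet> dv t))
            = (\<lambda>t. Im (ip n (chi ustar l t) (mvmul n (HZ p muB g (dv t)) (psi ustar l t))))"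
          unfolding n_def Im_HZ Fv_def ..
        ultimately show ?thesis by simp
      qed
      show ?thesis unfolding Q_def
        by (rule core[OF T hb kS e dpsi dphi init chiT chic dchi adjH adjP CH(2) CZ(2) CP' bpsi bchi
              CH(1) CZ(1) CP(1) Psi(1) X(1) Jphi Jpsi Lint])
    qed
    have "(\<Sum>l<NL. \<epsilon> * (4 / kS) * (muB * g * Lv l) - \<epsilon>^2 * Q) \<le> (\<Sum>l<NL. Jl ue l - Jl ustar l)"
      by (intro sum_mono percore) auto
    also have "\<dots> = (\<Sum>l<NL. Jl ue l) - (\<Sum>l<NL. Jl ustar l)" by (simp add: sum_subtractf)
    also have "\<dots> \<le> 0"
    proof -
      have "Jcost p T kS (psi ue) \<le> Jcost p T kS (psi ustar)" using ustar_opt ueC by blast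
      then have "kS / (3 * 2 ^ (p + 1)) * (\<Sum>l<NL. Jl ue l) \<le> kS / (3 * 2 ^ (p + 1)) * (\<Sum>l<NL. Jl ustar l)"
        unfolding Jcost_eq .
      moreover have "0 < kS / (3 * 2 ^ (p + 1))" using kS by simp
      ultimately have "(\<Sum>l<NL. Jl ue l) \<le> (\<Sum>l<NL. Jl ustar l)"
        by (meson mult_le_cancel_left_pos)
      then show ?thesis by simp
    qed
    finally have "\<epsilon> * ((4 / kS) * (muB * g * (\<Sum>l<NL. Lv l))) - \<epsilon>^2 * (real NL * Q) \<le> 0"
      by (simp add: sum_subtractf sum_distrib_left mult_ac)
    then have "\<epsilon> * ((4 / kS) * (muB * g * (\<Sum>l<NL. Lv l))) \<le> \<epsilon> * (\<epsilon> * (real NL * Q))"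
      by (simp add: power2_eq_square mult_ac)
    then show ?thesis using e by (meson mult_le_cancel_left_pos)
  qed
  have "(4 / kS) * (muB * g * (\<Sum>l<NL. Lv l)) \<le> 0"
    by (rule eps_limit[where B="real NL * Q"]) (use key in auto)
  then have "muB * g * (\<Sum>l<NL. Lv l) \<le> 0" using kS
    by (metis divide_nonpos_pos mult_le_0_iff times_divide_eq_left zero_less_divide_iff zero_less_numeral not_le)
  then show ?thesis unfolding Lv_def dv_def vs_def NL_def .
qed


theorem corollary2:
  fixes p :: nat
    and T hbar muB g kS kT gamma :: real
    and v0 m M :: "real^3"
    and A :: "nat \<Rightarrow> real^3"
    and psi chi :: "(real \<Rightarrow> real^3) \<Rightarrow> nat \<Rightarrow> real \<Rightarrow> cvec"
    and ustar :: "real \<Rightarrow> real^3"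
  assumes "T > 0" and "hbar > 0" and "kS > 0" and "kT > 0" and "gamma > 0"
    and "\<forall>i. m $ i < M $ i"
    and psi_sol: "\<forall>u \<in> Ctrl T m M. \<forall>l < 3 * 2 ^ p.
          is_psi_sol p T hbar muB g A kS kT (vfilt gamma v0 u) (psiT p l) (psi u l)"
    and chi_sol: "\<forall>u \<in> Ctrl T m M. \<forall>l < 3 * 2 ^ p.
          is_chi_sol p T hbar muB g A kS kT (vfilt gamma v0 u) (psi u l) (chi u l)"
    and ustar_adm: "ustar \<in> Ctrl T m M"
    and ustar_opt: "\<forall>u \<in> Ctrl T m M. Jcost p T kS (psi u) \<le> Jcost p T kS (psi ustar)"
  shows "\<forall>u \<in> Ctrl T m M.
           set_lebesgue_integral lborel {0..T}
             (\<lambda>t. HP p T muB g gamma (psi ustar) (u t) (chi ustar) t)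
         \<le> set_lebesgue_integral lborel {0..T}
             (\<lambda>t. HP p T muB g gamma (psi ustar) (ustar t) (chi ustar) t)"
proof
  fix u assume u: "u \<in> Ctrl T m M"
  have Fc: "\<forall>l < 3 * 2 ^ p. continuous_on {0..T} (Fv p (psi ustar l) (chi ustar l))"
  proof (intro allI impI)
    fix l :: nat assume l: "l < 3 * 2 ^ p"
    have ps: "is_psi_sol p T hbar muB g A kS kT (vfilt gamma v0 ustar) (psiT p l) (psi ustar l)"
      using psi_sol ustar_adm l by blast
    have cs: "is_chi_sol p T hbar muB g A kS kT (vfilt gamma v0 ustar) (psi ustar l) (chi ustar l)"
      using chi_sol ustar_adm l by blast
    show "continuous_on {0..T} (Fv p (psi ustar l) (chi ustar l))"
    proof (rule Fv_cont)
      fix k assume k: "k < ndim p"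
      show "continuous_on {0..T} (\<lambda>t. psi ustar l t k)"
        by (rule continuous_on_vector_derivative) (use ps k in \<open>auto simp: is_psi_sol_def\<close>)
      show "continuous_on {0..T} (\<lambda>t. chi ustar l t k)"
        using cs k unfolding is_chi_sol_def by blast
    qed
  qed
  have d: "set_lebesgue_integral lborel {0..T} (\<lambda>t. HP p T muB g gamma (psi ustar) (u t) (chi ustar) t)
       - set_lebesgue_integral lborel {0..T} (\<lambda>t. HP p T muB g gamma (psi ustar) (ustar t) (chi ustar) t)
     = (muB * g / (3 * 2 powr (real p - 1))) *
         (\<Sum>l < 3 * 2 ^ p. LINT t:{0..T}|lborel. Fv p (psi ustar l) (chi ustar l) t \<bullet> (vfilt gamma v0 u t - vfilt gamma v0 ustar t))"
    by (rule HP_diff[OF \<open>gamma > 0\<close> u ustar_adm Fc])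
  have i: "muB * g * (\<Sum>l < 3 * 2 ^ p. LINT t:{0..T}|lborel.
            Fv p (psi ustar l) (chi ustar l) t \<bullet> (vfilt gamma v0 u t - vfilt gamma v0 ustar t)) \<le> 0"
    by (rule main_ineq[OF \<open>T > 0\<close> \<open>hbar > 0\<close> \<open>kS > 0\<close> \<open>gamma > 0\<close> psi_sol chi_sol ustar_adm ustar_opt u])
  have pos: "0 < 3 * 2 powr (real p - 1)" by simp
  have "(muB * g / (3 * 2 powr (real p - 1))) *
         (\<Sum>l < 3 * 2 ^ p. LINT t:{0..T}|lborel. Fv p (psi ustar l) (chi ustar l) t \<bullet> (vfilt gamma v0 u t - vfilt gamma v0 ustar t))
      = (muB * g * (\<Sum>l < 3 * 2 ^ p. LINT t:{0..T}|lborel. Fv p (psi ustar l) (chi ustar l) t \<bullet> (vfilt gamma v0 u t - vfilt gamma v0 ustar t)))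
         / (3 * 2 powr (real p - 1))" by simp
  also have "\<dots> \<le> 0" using i pos by (simp add: divide_nonpos_pos)
  finally show "set_lebesgue_integral lborel {0..T} (\<lambda>t. HP p T muB g gamma (psi ustar) (u t) (chi ustar) t)
         \<le> set_lebesgue_integral lborel {0..T} (\<lambda>t. HP p T muB g gamma (psi ustar) (ustar t) (chi ustar) t)"
    using d by simp
qed


end
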